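(* Let $\mathcal{G}$ be a class of graphs and $r\ge 2$ an integer. Then $\mathcal{G}$ is fractionally-$\mathrm{tw}$-fragile if and only if $\mathcal{A}_{\mathcal{G}}^{(r)}$ is $\mathrm{tw}$-pliable.
   Context: A $\sigma$-structure $\mathbb{A}$ ($\sigma$ a finite set of symbols with arities) is a finite domain $A$ with functions $f^{\mathbb{A}}\colon A^{\mathrm{ar}(f)}\to\mathbb{Q}_{\ge0}$. For a map $h\colon A\to B$, $\mathrm{val}(h)=\sum_{f\in\sigma}\sum_{\bar x\in A^{\mathrm{ar}(f)}}f^{\mathbb{A}}(\bar x)f^{\mathbb{B}}(h(\bar x))$, $\mathrm{opt}(\mathbb{A},\mathbb{B})=\max_h\mathrm{val}(h)$ over all maps, and $d_{\mathrm{opt}}(\mathbb{A},\mathbb{B})=\sup_{\mathbb{C}}|\ln\mathrm{opt}(\mathbb{A},\mathbb{C})-\ln\mathrm{opt}(\mathbb{B},\mathbb{C})|$ over all $\sigma$-structures $\mathbb{C}$ ($\ln0=-\infty$, $|\ln0-\ln0|=0$). The Gaifman graph of $\mathbb{A}$ has vertex set $A$, distinct $u,v$ adjacent iff both occur in some tuple $\bar x$ with $f^{\mathbb{A}}(\bar x)>0$; $\mathrm{tw}(\mathbb{A})$ is its treewidth. A class $\mathcal{A}$ is $\mathrm{tw}$-pliable if for every $\varepsilon>0$ there is $k$ such that every $\mathbb{A}\in\mathcal{A}$ (signature $\sigma$) has a $\sigma$-structure $\mathbb{B}$ with $\mathrm{tw}(\mathbb{B})\le k$ and $d_{\mathrm{opt}}(\mathbb{A},\mathbb{B})\le\varepsilon$.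 $\mathcal{A}_{\mathcal{G}}^{(r)}$ is the class of all structures (any signature) whose Gaifman graph lies in $\mathcal{G}$ and whose symbols all have arity at most $r$. A distribution $\pi$ over subsets of $V$ is $\varepsilon$-thin if $\Pr_{X\sim\pi}[v\in X]\le\varepsilon$ for every $v\in V$. $\mathcal{G}$ is fractionally-$\mathrm{tw}$-fragile if for every $\varepsilon>0$ there is $k$ such that every $G\in\mathcal{G}$ has an $\varepsilon$-thin distribution over sets $X\subseteq V(G)$ with $\mathrm{tw}(G-X)\le k$. *)

theory Defs
  imports "HOL-Probability.Probability"
begin

type_synonym graph = "nat set \<times> (nat \<times> nat) set"

definition is_graph :: "graph \<Rightarrow> bool" where
  "is_graph G \<longleftrightarrow> finite (fst G) \<and> snd G \<subseteq> fst G \<times> fst G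
     \<and> (\<forall>u v. (u, v) \<in> snd G \<longrightarrow> (v, u) \<in> snd G) \<and> (\<forall>u. (u, u) \<notin> snd G)"

definition graph_iso :: "graph \<Rightarrow> graph \<Rightarrow> bool" where
  "graph_iso G H \<longleftrightarrow> (\<exists>g. bij_betw g (fst G) (fst H) \<and>
     (\<forall>u\<in>fst G. \<forall>v\<in>fst G. (u, v) \<in> snd G \<longleftrightarrow> (g u, g v) \<in> snd H))"

text \<open>A (finite) tree: nonempty finite node set, symmetric irreflexive edge relation,
connected, with exactly |N|-1 undirected edges.\<close>
definition is_tree :: "nat set \<Rightarrow> (nat \<times> nat) set \<Rightarrow> bool" where
  "is_tree N F \<longleftrightarrow> finite N \<and> N \<noteq> {} \<and> F \<subseteq> N \<times> N
     \<and> (\<forall>a b. (a, b) \<in> F \<longrightarrow> (b, a) \<in> F) \<and> (\<forall>a. (a, a) \<notin> F)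
     \<and> (\<forall>s\<in>N. \<forall>t\<in>N. (s, t) \<in> F\<^sup>*)
     \<and> card F = 2 * (card N - 1)"

definition tree_decomp :: "graph \<Rightarrow> nat set \<Rightarrow> (nat \<times> nat) set \<Rightarrow> (nat \<Rightarrow> nat set) \<Rightarrow> bool" where
  "tree_decomp G N F \<beta> \<longleftrightarrow> is_tree N F
     \<and> (\<forall>t\<in>N. \<beta> t \<subseteq> fst G)
     \<and> (\<forall>v\<in>fst G. \<exists>t\<in>N. v \<in> \<beta> t)
     \<and> (\<forall>u v. (u, v) \<in> snd G \<longrightarrow> (\<exists>t\<in>N. u \<in> \<beta> t \<and> v \<in> \<beta> t))
     \<and> (\<forall>v\<in>fst G. \<forall>s\<in>N. \<forall>t\<in>N. v \<in> \<beta> s \<longrightarrow> v \<in> \<beta> t \<longrightarrow>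
           (s, t) \<in> (F \<inter> ({x. v \<in> \<beta> x} \<times> {x. v \<in> \<beta> x}))\<^sup>*)"

definition treewidth :: "graph \<Rightarrow> nat" where
  "treewidth G = (LEAST k. \<exists>N F \<beta>. tree_decomp G N F \<beta> \<and> (\<forall>t\<in>N. card (\<beta> t) \<le> k + 1))"

definition del_verts :: "graph \<Rightarrow> nat set \<Rightarrow> graph" where
  "del_verts G X = (fst G - X, snd G \<inter> ((fst G - X) \<times> (fst G - X)))"

definition frac_tw_fragile :: "graph set \<Rightarrow> bool" where
  "frac_tw_fragile \<G> \<longleftrightarrow> (\<forall>\<epsilon>::real. \<epsilon> > 0 \<longrightarrow> (\<exists>k::nat. \<forall>G\<in>\<G>. \<exists>\<pi> :: nat set pmf.
      set_pmf \<pi> \<subseteq> {X. X \<subseteq> fst G \<and> treewidth (del_verts G X) \<le> k}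
    \<and> (\<forall>v\<in>fst G. measure_pmf.prob \<pi> {X. v \<in> X} \<le> \<epsilon>)))"

type_synonym signature = "nat set \<times> (nat \<Rightarrow> nat)"
type_synonym vstruct = "nat set \<times> (nat \<Rightarrow> nat list \<Rightarrow> real)"

definition tuples :: "nat set \<Rightarrow> nat \<Rightarrow> nat list set" where
  "tuples A n = {xs. length xs = n \<and> set xs \<subseteq> A}"

definition is_sig :: "signature \<Rightarrow> bool" where
  "is_sig \<sigma> \<longleftrightarrow> finite (fst \<sigma>)"

definition is_struct :: "signature \<Rightarrow> vstruct \<Rightarrow> bool" where
  "is_struct \<sigma> \<A> \<longleftrightarrow> finite (fst \<A>) \<and> fst \<A> \<noteq> {}
     \<and> (\<forall>f xs. snd \<A> f xs \<in> \<rat> \<and> snd \<A> f xs \<ge> 0)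
     \<and> (\<forall>f xs. snd \<A> f xs \<noteq> 0 \<longrightarrow> f \<in> fst \<sigma> \<and> xs \<in> tuples (fst \<A>) (snd \<sigma> f))"

definition sval :: "signature \<Rightarrow> vstruct \<Rightarrow> vstruct \<Rightarrow> (nat \<Rightarrow> nat) \<Rightarrow> real" where
  "sval \<sigma> \<A> \<B> h = (\<Sum>f\<in>fst \<sigma>. \<Sum>xs\<in>tuples (fst \<A>) (snd \<sigma> f).
       snd \<A> f xs * snd \<B> f (map h xs))"

definition sopt :: "signature \<Rightarrow> vstruct \<Rightarrow> vstruct \<Rightarrow> real" where
  "sopt \<sigma> \<A> \<B> = Max {sval \<sigma> \<A> \<B> h | h. \<forall>x\<in>fst \<A>. h x \<in> fst \<B>}"

definition lnE :: "real \<Rightarrow> ereal" where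
  "lnE x = (if x = 0 then - \<infinity> else ereal (ln x))"

definition logdiff :: "real \<Rightarrow> real \<Rightarrow> ereal" where
  "logdiff a b = (if a = 0 \<and> b = 0 then 0 else \<bar>lnE a - lnE b\<bar>)"

definition d_opt :: "signature \<Rightarrow> vstruct \<Rightarrow> vstruct \<Rightarrow> ereal" where
  "d_opt \<sigma> \<A> \<B> = (SUP \<C>\<in>{\<C>. is_struct \<sigma> \<C>}. logdiff (sopt \<sigma> \<A> \<C>) (sopt \<sigma> \<B> \<C>))"

definition gaifman :: "vstruct \<Rightarrow> graph" where
  "gaifman \<A> = (fst \<A>, {(u, v). u \<noteq> v \<and> (\<exists>f xs. snd \<A> f xs > 0 \<and> u \<in> set xs \<and> v \<in> set xs)})"

definition A_class :: "graph set \<Rightarrow> nat \<Rightarrow> (signature \<times> vstruct) set" where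
  "A_class \<G> r = {(\<sigma>, \<A>). is_sig \<sigma> \<and> is_struct \<sigma> \<A>
      \<and> (\<exists>G\<in>\<G>. graph_iso (gaifman \<A>) G) \<and> (\<forall>f\<in>fst \<sigma>. snd \<sigma> f \<le> r)}"

definition tw_pliable :: "(signature \<times> vstruct) set \<Rightarrow> bool" where
  "tw_pliable \<AA> \<longleftrightarrow> (\<forall>\<epsilon>::real. \<epsilon> > 0 \<longrightarrow> (\<exists>k::nat. \<forall>(\<sigma>, \<A>)\<in>\<AA>.
      \<exists>\<B>. is_struct \<sigma> \<B> \<and> treewidth (gaifman \<B>) \<le> k \<and> d_opt \<sigma> \<A> \<B> \<le> ereal \<epsilon>))"

end

theory Submission
  imports Defs
begin

lemma sval_cong:
  assumes "\<forall>x\<in>fst A. h x = h' x"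
  shows "sval \<sigma> A B h = sval \<sigma> A B h'"
proof -
  have "\<And>f xs. xs \<in> tuples (fst A) (snd \<sigma> f) \<Longrightarrow> map h xs = map h' xs"
    using assms unfolding tuples_def by (auto intro: map_cong)
  then show ?thesis unfolding sval_def by (intro sum.cong refl) (simp only:)
qed

lemma sopt_set_finite:
  assumes "finite (fst A)" "finite (fst C)"
  shows "finite {sval \<sigma> A C h | h. \<forall>x\<in>fst A. h x \<in> fst C}"
proof -
  have "{sval \<sigma> A C h | h. \<forall>x\<in>fst A. h x \<in> fst C} \<subseteq> (\<lambda>h. sval \<sigma> A C h) ` (fst A \<rightarrow>\<^sub>E fst C)"
  proof
    fix y assume "y \<in> {sval \<sigma> A C h | h. \<forall>x\<in>fst A. h x \<in> fst C}"
    then obtain h where h: "\<forall>x\<in>fst A. h x \<in> fst C" "y = sval \<sigma> A C h" by auto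
    have "restrict h (fst A) \<in> fst A \<rightarrow>\<^sub>E fst C" using h by auto
    moreover have "sval \<sigma> A C (restrict h (fst A)) = y" using h by (auto intro: sval_cong)
    ultimately show "y \<in> (\<lambda>h. sval \<sigma> A C h) ` (fst A \<rightarrow>\<^sub>E fst C)" by force
  qed
  then show ?thesis using assms by (meson finite_PiE finite_imageI finite_subset)
qed

lemma sopt_ge:
  assumes "finite (fst A)" "finite (fst C)" "\<forall>x\<in>fst A. h x \<in> fst C"
  shows "sval \<sigma> A C h \<le> sopt \<sigma> A C"
  unfolding sopt_def using assms sopt_set_finite by (intro Max_ge) auto

lemma sopt_attained:
  assumes "finite (fst A)" "finite (fst C)" "fst C \<noteq> {}"
  shows "\<exists>h. (\<forall>x\<in>fst A. h x \<in> fst C) \<and> sopt \<sigma> A C = sval \<sigma> A C h"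
proof -
  obtain c where "c \<in> fst C" using assms by auto
  then have ne: "{sval \<sigma> A C h | h. \<forall>x\<in>fst A. h x \<in> fst C} \<noteq> {}" by auto
  have "sopt \<sigma> A C \<in> {sval \<sigma> A C h | h. \<forall>x\<in>fst A. h x \<in> fst C}"
    unfolding sopt_def using Max_in[OF sopt_set_finite[OF assms(1,2)] ne] .
  then show ?thesis by auto
qed

lemma sval_nonneg:
  assumes "is_struct \<sigma> A" "is_struct \<sigma> C"
  shows "sval \<sigma> A C h \<ge> 0"
  using assms unfolding sval_def is_struct_def by (intro sum_nonneg mult_nonneg_nonneg) auto

lemma sopt_nonneg:
  assumes "is_struct \<sigma> A" "is_struct \<sigma> C"
  shows "sopt \<sigma> A C \<ge> 0"
proof -
  have "finite (fst A)" "finite (fst C)" "fst C \<noteq> {}" using assms unfolding is_struct_def by auto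
  then obtain h where "sopt \<sigma> A C = sval \<sigma> A C h"
    using sopt_attained by blast
  then show ?thesis using sval_nonneg assms by simp
qed

lemma logdiff_bound:
  assumes "logdiff a b \<le> ereal \<epsilon>" "a > 0" "b \<ge> 0"
  shows "b > 0 \<and> b \<ge> exp (-\<epsilon>) * a"
proof -
  have "b \<noteq> 0"
  proof
    assume "b = 0"
    then have "logdiff a b = \<infinity>" using assms(2) unfolding logdiff_def lnE_def by simp
    then show False using assms(1) by simp
  qed
  then have bp: "b > 0" using assms by simp
  then have "logdiff a b = ereal \<bar>ln a - ln b\<bar>" using assms(2) unfolding logdiff_def lnE_def by simp
  then have "\<bar>ln a - ln b\<bar> \<le> \<epsilon>" using assms(1) by simp
  then have "ln a - \<epsilon> \<le> ln b" by linarith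
  then have "exp (ln a - \<epsilon>) \<le> b" using bp by (metis exp_le_cancel_iff exp_ln)
  then have "exp (-\<epsilon>) * a \<le> b" using assms(2) by (simp add: exp_diff exp_minus field_simps)
  then show ?thesis using bp by simp
qed

lemma logdiff_sym: "logdiff a b = logdiff b a"
  unfolding logdiff_def lnE_def by (auto simp: abs_minus_commute)

lemma dopt_bounds:
  assumes "is_struct \<sigma> A" "is_struct \<sigma> B" "d_opt \<sigma> A B \<le> ereal \<epsilon>" "is_struct \<sigma> C"
  shows "sopt \<sigma> A C > 0 \<Longrightarrow> sopt \<sigma> B C \<ge> exp (-\<epsilon>) * sopt \<sigma> A C"
    and "sopt \<sigma> B C > 0 \<Longrightarrow> sopt \<sigma> A C \<ge> exp (-\<epsilon>) * sopt \<sigma> B C"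
proof -
  have "logdiff (sopt \<sigma> A C) (sopt \<sigma> B C) \<le> d_opt \<sigma> A B"
    unfolding d_opt_def using assms(4) by (intro SUP_upper) auto
  then have l: "logdiff (sopt \<sigma> A C) (sopt \<sigma> B C) \<le> ereal \<epsilon>" using assms(3) by simp
  show "sopt \<sigma> A C > 0 \<Longrightarrow> sopt \<sigma> B C \<ge> exp (-\<epsilon>) * sopt \<sigma> A C"
    using logdiff_bound[OF l] sopt_nonneg assms by blast
  show "sopt \<sigma> B C > 0 \<Longrightarrow> sopt \<sigma> A C \<ge> exp (-\<epsilon>) * sopt \<sigma> B C"
    using logdiff_bound[OF l[unfolded logdiff_sym[of "sopt \<sigma> A C"]]] sopt_nonneg assms by blast
qed

lemma dopt_le_from:
  assumes "0 \<le> \<rho>" "\<rho> < 1"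
    and "\<And>C. is_struct \<sigma> C \<Longrightarrow> sopt \<sigma> B C \<le> sopt \<sigma> A C \<and> (1 - \<rho>) * sopt \<sigma> A C \<le> sopt \<sigma> B C"
    and "\<And>C. is_struct \<sigma> C \<Longrightarrow> sopt \<sigma> B C \<ge> 0"
  shows "d_opt \<sigma> A B \<le> ereal (- ln (1 - \<rho>))"
  unfolding d_opt_def
proof (rule SUP_least)
  fix C assume "C \<in> {C. is_struct \<sigma> C}"
  then have C: "is_struct \<sigma> C" by simp
  let ?a = "sopt \<sigma> A C" and ?b = "sopt \<sigma> B C"
  have ab: "?b \<le> ?a" "(1 - \<rho>) * ?a \<le> ?b" "?b \<ge> 0" using assms(3,4)[OF C] by auto
  have lnpos: "- ln (1 - \<rho>) \<ge> 0" using assms by simp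
  show "logdiff ?a ?b \<le> ereal (- ln (1 - \<rho>))"
  proof (cases "?b = 0")
    case True
    then have "?a = 0" using ab assms by (smt (verit) mult_pos_pos)
    then show ?thesis using True lnpos unfolding logdiff_def by simp
  next
    case False
    then have bp: "?b > 0" using ab by simp
    then have ap: "?a > 0" using ab by simp
    have "logdiff ?a ?b = ereal \<bar>ln ?a - ln ?b\<bar>" using ap bp unfolding logdiff_def lnE_def by simp
    also have "\<bar>ln ?a - ln ?b\<bar> = ln ?a - ln ?b" using ab bp by simp
    also have "\<dots> \<le> - ln (1 - \<rho>)"
    proof -
      have "ln ((1 - \<rho>) * ?a) \<le> ln ?b" using ab ap bp assms by (subst ln_le_cancel_iff) auto
      then show ?thesis using ap assms by (simp add: ln_mult)
    qed
    finally show ?thesis by simp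
  qed
qed

definition decomp_le :: "graph \<Rightarrow> nat \<Rightarrow> bool" where
  "decomp_le K k \<longleftrightarrow> (\<exists>N F \<beta>. tree_decomp K N F \<beta> \<and> (\<forall>t\<in>N. card (\<beta> t) \<le> k + 1))"

definition wf_graph :: "graph \<Rightarrow> bool" where
  "wf_graph K \<longleftrightarrow> finite (fst K) \<and> snd K \<subseteq> fst K \<times> fst K"

lemma is_tree_single: "is_tree {n} {}"
  unfolding is_tree_def by auto

lemma decomp_trivial:
  assumes "wf_graph K"
  shows "tree_decomp K {0} {} (\<lambda>_. fst K)"
  using assms unfolding tree_decomp_def wf_graph_def by (auto simp: is_tree_single)

lemma decomp_le_exists:
  assumes "wf_graph K"
  shows "decomp_le K (card (fst K))"
  unfolding decomp_le_def using decomp_trivial[OF assms] by fastforce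

lemma tw_le_iff:
  assumes "wf_graph K"
  shows "treewidth K \<le> k \<longleftrightarrow> decomp_le K k"
proof
  have ex: "\<exists>k. decomp_le K k" using decomp_le_exists[OF assms] by blast
  have *: "decomp_le K (treewidth K)"
    unfolding treewidth_def using LeastI_ex[OF ex[unfolded decomp_le_def]] unfolding decomp_le_def .
  assume "treewidth K \<le> k"
  then show "decomp_le K k" using * unfolding decomp_le_def by (meson add_le_mono1 order_trans)
next
  assume "decomp_le K k"
  then show "treewidth K \<le> k" unfolding treewidth_def decomp_le_def by (rule Least_le)
qed

lemma wf_del_verts: "wf_graph G \<Longrightarrow> wf_graph (del_verts G X)"
  unfolding wf_graph_def del_verts_def by auto

lemma is_graph_wf: "is_graph G \<Longrightarrow> wf_graph G"
  unfolding wf_graph_def is_graph_def by auto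

lemma decomp_embed:
  assumes "wf_graph H" "inj_on g (fst H)" "g ` fst H \<subseteq> fst K"
    and "\<And>u v. (u, v) \<in> snd H \<Longrightarrow> (g u, g v) \<in> snd K"
    and "tree_decomp K N F \<beta>" "finite (fst K)"
  shows "tree_decomp H N F (\<lambda>t. {z\<in>fst H. g z \<in> \<beta> t})
    \<and> (\<forall>t\<in>N. card {z\<in>fst H. g z \<in> \<beta> t} \<le> card (\<beta> t))"
proof -
  note td = assms(5)[unfolded tree_decomp_def]
  have bag: "\<beta> t \<subseteq> fst K" if "t \<in> N" for t using td that by auto
  have c: "card {z\<in>fst H. g z \<in> \<beta> t} \<le> card (\<beta> t)" if "t \<in> N" for t
  proof (rule card_inj_on_le)
    show "inj_on g {z \<in> fst H. g z \<in> \<beta> t}" using assms(2) by (rule inj_on_subset) auto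
    show "g ` {z \<in> fst H. g z \<in> \<beta> t} \<subseteq> \<beta> t" by auto
    show "finite (\<beta> t)" using bag[OF that] assms(6) finite_subset by blast
  qed
  have eqs: "{x. z \<in> {z\<in>fst H. g z \<in> \<beta> x}} = {x. g z \<in> \<beta> x}" if "z \<in> fst H" for z
    using that by auto
  have "tree_decomp H N F (\<lambda>t. {z\<in>fst H. g z \<in> \<beta> t})"
    unfolding tree_decomp_def
  proof (intro conjI ballI allI impI)
    show "is_tree N F" using td by simp
    show "\<And>t. t \<in> N \<Longrightarrow> {z \<in> fst H. g z \<in> \<beta> t} \<subseteq> fst H" by auto
    show "\<exists>t\<in>N. v \<in> {z \<in> fst H. g z \<in> \<beta> t}" if "v \<in> fst H" for v
      using td that assms(3) by blast
    show "\<exists>t\<in>N. u \<in> {z \<in> fst H. g z \<in> \<beta> t} \<and> v \<in> {z \<in> fst H. g z \<in> \<beta> t}"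
      if uv: "(u, v) \<in> snd H" for u v
    proof -
      have "u \<in> fst H" "v \<in> fst H" using uv assms(1) unfolding wf_graph_def by auto
      moreover obtain t where "t \<in> N" "g u \<in> \<beta> t" "g v \<in> \<beta> t" using td assms(4)[OF uv] by blast
      ultimately show ?thesis by auto
    qed
    show "(s, t) \<in> (F \<inter> {x. v \<in> {z \<in> fst H. g z \<in> \<beta> x}} \<times> {x. v \<in> {z \<in> fst H. g z \<in> \<beta> x}})\<^sup>*"
      if "v \<in> fst H" "s \<in> N" "t \<in> N" "v \<in> {z \<in> fst H. g z \<in> \<beta> s}" "v \<in> {z \<in> fst H. g z \<in> \<beta> t}" for v s t
    proof -
      have "g v \<in> fst K" using that assms(3) by auto
      then have "(s, t) \<in> (F \<inter> {x. g v \<in> \<beta> x} \<times> {x. g v \<in> \<beta> x})\<^sup>*" using td that by auto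
      then show ?thesis using eqs[OF that(1)] by simp
    qed
  qed
  then show ?thesis using c by blast
qed

lemma tw_embed:
  assumes "wf_graph H" "wf_graph K" "inj_on g (fst H)" "g ` fst H \<subseteq> fst K"
    and "\<And>u v. (u, v) \<in> snd H \<Longrightarrow> (g u, g v) \<in> snd K"
  shows "treewidth H \<le> treewidth K"
proof -
  obtain N F \<beta> where d: "tree_decomp K N F \<beta>" "\<forall>t\<in>N. card (\<beta> t) \<le> treewidth K + 1"
    using tw_le_iff[OF assms(2), of "treewidth K"] unfolding decomp_le_def by auto
  have "finite (fst K)" using assms(2) unfolding wf_graph_def by simp
  from decomp_embed[OF assms(1,3,4) assms(5) d(1) this] d(2)
  have "decomp_le H (treewidth K)" unfolding decomp_le_def by (meson order_trans)
  then show ?thesis using tw_le_iff[OF assms(1)] by simp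
qed

definition induced :: "graph \<Rightarrow> nat set \<Rightarrow> graph" where
  "induced K S = (S, snd K \<inter> (S \<times> S))"

lemma rtrancl_map_prod:
  assumes "(x, y) \<in> R\<^sup>*"
  shows "(f x, f y) \<in> (map_prod f f ` R)\<^sup>*"
  using assms
proof (induction rule: rtrancl_induct)
  case base then show ?case by simp
next
  case (step y z)
  have "(f y, f z) \<in> map_prod f f ` R" using step(2) by force
  then show ?case using step(3) by (meson rtrancl.rtrancl_into_rtrancl)
qed

lemma decomp_le_mono: "decomp_le K k \<Longrightarrow> k \<le> k' \<Longrightarrow> decomp_le K k'"
  unfolding decomp_le_def by (meson add_le_mono1 order_trans)

lemma merge2:
  assumes wf: "wf_graph K" and V: "V1 \<union> V2 = fst K" "V1 \<inter> V2 = {}"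
    and E: "\<And>u v. (u, v) \<in> snd K \<Longrightarrow> (u \<in> V1 \<and> v \<in> V1) \<or> (u \<in> V2 \<and> v \<in> V2)"
    and d1: "decomp_le (induced K V1) k" and d2: "decomp_le (induced K V2) k"
  shows "decomp_le K k"
proof -
  obtain N1 F1 \<beta>1 where D1: "tree_decomp (induced K V1) N1 F1 \<beta>1" "\<forall>t\<in>N1. card (\<beta>1 t) \<le> k + 1"
    using d1 unfolding decomp_le_def by blast
  obtain N2 F2 \<beta>2 where D2: "tree_decomp (induced K V2) N2 F2 \<beta>2" "\<forall>t\<in>N2. card (\<beta>2 t) \<le> k + 1"
    using d2 unfolding decomp_le_def by blast
  note T1 = D1(1)[unfolded tree_decomp_def induced_def fst_conv snd_conv]
  note T2 = D2(1)[unfolded tree_decomp_def induced_def fst_conv snd_conv]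
  have tr1: "finite N1" "N1 \<noteq> {}" "F1 \<subseteq> N1 \<times> N1" "\<And>a b. (a, b) \<in> F1 \<Longrightarrow> (b, a) \<in> F1"
    "\<And>a. (a, a) \<notin> F1" "\<And>s t. s \<in> N1 \<Longrightarrow> t \<in> N1 \<Longrightarrow> (s, t) \<in> F1\<^sup>*" "card F1 = 2 * (card N1 - 1)"
    using T1 unfolding is_tree_def by auto
  have tr2: "finite N2" "N2 \<noteq> {}" "F2 \<subseteq> N2 \<times> N2" "\<And>a b. (a, b) \<in> F2 \<Longrightarrow> (b, a) \<in> F2"
    "\<And>a. (a, a) \<notin> F2" "\<And>s t. s \<in> N2 \<Longrightarrow> t \<in> N2 \<Longrightarrow> (s, t) \<in> F2\<^sup>*" "card F2 = 2 * (card N2 - 1)"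
    using T2 unfolding is_tree_def by auto
  obtain a b where ab: "a \<in> N1" "b \<in> N2" using tr1(2) tr2(2) by blast
  define e1 :: "nat \<Rightarrow> nat" where "e1 = (\<lambda>n. 2 * n)"
  define e2 :: "nat \<Rightarrow> nat" where "e2 = (\<lambda>n. 2 * n + 1)"
  have inj: "inj e1" "inj e2" unfolding e1_def e2_def inj_def by auto
  have disj: "e1 x \<noteq> e2 y" for x y unfolding e1_def e2_def by presburger
  define N where "N = e1 ` N1 \<union> e2 ` N2"
  define F1' where "F1' = map_prod e1 e1 ` F1"
  define F2' where "F2' = map_prod e2 e2 ` F2"
  define F where "F = F1' \<union> F2' \<union> {(e1 a, e2 b), (e2 b, e1 a)}"
  define \<beta> where "\<beta> = (\<lambda>x. if even x then \<beta>1 (x div 2) else \<beta>2 (x div 2))"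
  have \<beta>e1: "\<beta> (e1 x) = \<beta>1 x" for x unfolding \<beta>_def e1_def by simp
  have \<beta>e2: "\<beta> (e2 x) = \<beta>2 x" for x unfolding \<beta>_def e2_def by simp
  have F1'_sub: "F1' \<subseteq> N \<times> N" using tr1(3) unfolding F1'_def N_def by auto
  have F2'_sub: "F2' \<subseteq> N \<times> N" using tr2(3) unfolding F2'_def N_def by auto
  have inF1: "(e1 x, e1 y) \<in> F1' \<longleftrightarrow> (x, y) \<in> F1" for x y
    unfolding F1'_def using inj(1) by (auto simp: inj_eq)
  have inF2: "(e2 x, e2 y) \<in> F2' \<longleftrightarrow> (x, y) \<in> F2" for x y
    unfolding F2'_def using inj(2) by (auto simp: inj_eq)
  have c1: "(e1 s, e1 t) \<in> F1'\<^sup>*" if "s \<in> N1" "t \<in> N1" for s t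
    using rtrancl_map_prod[OF tr1(6)[OF that], of e1] unfolding F1'_def .
  have c2: "(e2 s, e2 t) \<in> F2'\<^sup>*" if "s \<in> N2" "t \<in> N2" for s t
    using rtrancl_map_prod[OF tr2(6)[OF that], of e2] unfolding F2'_def .
  have FF1: "F1'\<^sup>* \<subseteq> F\<^sup>*" "F2'\<^sup>* \<subseteq> F\<^sup>*" unfolding F_def by (rule rtrancl_mono; blast)+
  have br: "(e1 a, e2 b) \<in> F" "(e2 b, e1 a) \<in> F" unfolding F_def by auto
  have conn: "(s, t) \<in> F\<^sup>*" if "s \<in> N" "t \<in> N" for s t
  proof -
    have a1: "(e1 x, e1 a) \<in> F\<^sup>*" "(e1 a, e1 x) \<in> F\<^sup>*" if "x \<in> N1" for x
      using c1[OF that ab(1)] c1[OF ab(1) that] FF1 by auto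
    have b2: "(e2 x, e2 b) \<in> F\<^sup>*" "(e2 b, e2 x) \<in> F\<^sup>*" if "x \<in> N2" for x
      using c2[OF that ab(2)] c2[OF ab(2) that] FF1 by auto
    have ab': "(e1 a, e2 b) \<in> F\<^sup>*" "(e2 b, e1 a) \<in> F\<^sup>*" using br by auto
    from that consider (A) x y where "x \<in> N1" "y \<in> N1" "s = e1 x" "t = e1 y"
      | (B) x y where "x \<in> N1" "y \<in> N2" "s = e1 x" "t = e2 y"
      | (C) x y where "x \<in> N2" "y \<in> N1" "s = e2 x" "t = e1 y"
      | (D) x y where "x \<in> N2" "y \<in> N2" "s = e2 x" "t = e2 y"
      unfolding N_def by blast
    then show ?thesis
    proof cases
      case A then show ?thesis using c1 FF1 by blast
    next
      case B then show ?thesis using a1(1)[of x] ab'(1) b2(2)[of y] by (meson rtrancl_trans)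
    next
      case C then show ?thesis using b2(1)[of x] ab'(2) a1(2)[of y] by (meson rtrancl_trans)
    next
      case D then show ?thesis using c2 FF1 by blast
    qed
  qed
  have cardN: "card N = card N1 + card N2"
  proof -
    have i1: "inj_on e1 N1" "inj_on e2 N2" using inj by (auto intro: inj_on_subset)
    have "e1 ` N1 \<inter> e2 ` N2 = {}" using disj by blast
    then have "card N = card (e1 ` N1) + card (e2 ` N2)"
      unfolding N_def using tr1(1) tr2(1) by (intro card_Un_disjoint) auto
    then show ?thesis using card_image[OF i1(1)] card_image[OF i1(2)] by simp
  qed
  have cardF: "card F = card F1 + card F2 + 2"
  proof -
    have fin: "finite F1'" "finite F2'" unfolding F1'_def F2'_def
      using finite_subset[OF tr1(3)] finite_subset[OF tr2(3)] tr1(1) tr2(1) by auto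
    have mi1: "inj_on (map_prod e1 e1) F1" using inj(1) unfolding inj_on_def inj_def by auto
    have mi2: "inj_on (map_prod e2 e2) F2" using inj(2) unfolding inj_on_def inj_def by auto
    have k1: "card F1' = card F1" unfolding F1'_def by (rule card_image[OF mi1])
    have k2: "card F2' = card F2" unfolding F2'_def by (rule card_image[OF mi2])
    have d12: "F1' \<inter> F2' = {}" unfolding F1'_def F2'_def using disj by blast
    have d3: "(F1' \<union> F2') \<inter> {(e1 a, e2 b), (e2 b, e1 a)} = {}"
      unfolding F1'_def F2'_def using disj by (auto simp: disj[symmetric])
    have k3: "card {(e1 a, e2 b), (e2 b, e1 a)} = 2" using disj[of a b] by simp
    have "card (F1' \<union> F2') = card F1' + card F2'" using fin d12 by (intro card_Un_disjoint) auto
    moreover have "card F = card (F1' \<union> F2') + card {(e1 a, e2 b), (e2 b, e1 a)}"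
      unfolding F_def using fin d3 by (intro card_Un_disjoint) auto
    ultimately show ?thesis using k1 k2 k3 by simp
  qed
  have istree: "is_tree N F"
    unfolding is_tree_def
  proof (intro conjI allI impI ballI)
    show "finite N" unfolding N_def using tr1(1) tr2(1) by simp
    show "N \<noteq> {}" unfolding N_def using ab by auto
    show "F \<subseteq> N \<times> N" unfolding F_def using F1'_sub F2'_sub ab unfolding N_def by auto
    show "(y, x) \<in> F" if "(x, y) \<in> F" for x y
      using that tr1(4) tr2(4) unfolding F_def F1'_def F2'_def by auto
    show "(x, x) \<notin> F" for x
    proof -
      have par: "Suc (2 * y) \<noteq> 2 * z" "2 * z \<noteq> Suc (2 * y)" for y z :: nat by presburger+
      show ?thesis using tr1(5) tr2(5) par unfolding F_def F1'_def F2'_def e1_def e2_def by auto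
    qed
    show "(s, t) \<in> F\<^sup>*" if "s \<in> N" "t \<in> N" for s t using conn that by blast
    have "card N1 > 0" "card N2 > 0" using tr1(1,2) tr2(1,2) by (auto simp: card_gt_0_iff)
    then show "card F = 2 * (card N - 1)" using cardF cardN tr1(7) tr2(7) by simp
  qed
  have V12: "V1 \<subseteq> fst K" "V2 \<subseteq> fst K" using V by auto
  have b1sub: "\<beta>1 t \<subseteq> V1" if "t \<in> N1" for t using T1 that by auto
  have b2sub: "\<beta>2 t \<subseteq> V2" if "t \<in> N2" for t using T2 that by auto
  have b1s: "t \<in> N1 \<Longrightarrow> x \<in> \<beta>1 t \<Longrightarrow> x \<in> V1" for t x using b1sub by blast
  have b2s: "t \<in> N2 \<Longrightarrow> x \<in> \<beta>2 t \<Longrightarrow> x \<in> V2" for t x using b2sub by blast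
  have td: "tree_decomp K N F \<beta>"
    unfolding tree_decomp_def
  proof (intro conjI allI impI ballI)
    show "is_tree N F" by (rule istree)
    show "\<beta> t \<subseteq> fst K" if "t \<in> N" for t
      using that b1sub b2sub V12 unfolding N_def by (force simp: \<beta>e1 \<beta>e2)
    show "\<exists>t\<in>N. v \<in> \<beta> t" if "v \<in> fst K" for v
    proof (cases "v \<in> V1")
      case True
      then obtain t where "t \<in> N1" "v \<in> \<beta>1 t" using T1 by blast
      then show ?thesis unfolding N_def by (intro bexI[of _ "e1 t"]) (auto simp: \<beta>e1)
    next
      case False
      then have "v \<in> V2" using that V by auto
      then obtain t where "t \<in> N2" "v \<in> \<beta>2 t" using T2 by blast
      then show ?thesis unfolding N_def by (intro bexI[of _ "e2 t"]) (auto simp: \<beta>e2)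
    qed
    show "\<exists>t\<in>N. u \<in> \<beta> t \<and> v \<in> \<beta> t" if uvK: "(u, v) \<in> snd K" for u v
    proof (cases "u \<in> V1 \<and> v \<in> V1")
      case True
      then obtain t where "t \<in> N1" "u \<in> \<beta>1 t" "v \<in> \<beta>1 t" using T1 uvK by blast
      then show ?thesis unfolding N_def by (intro bexI[of _ "e1 t"]) (auto simp: \<beta>e1)
    next
      case False
      then have "u \<in> V2 \<and> v \<in> V2" using E[OF uvK] by auto
      then obtain t where "t \<in> N2" "u \<in> \<beta>2 t" "v \<in> \<beta>2 t" using T2 uvK by blast
      then show ?thesis unfolding N_def by (intro bexI[of _ "e2 t"]) (auto simp: \<beta>e2)
    qed
    show "(s, t) \<in> (F \<inter> {x. v \<in> \<beta> x} \<times> {x. v \<in> \<beta> x})\<^sup>*"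
      if "v \<in> fst K" "s \<in> N" "t \<in> N" "v \<in> \<beta> s" "v \<in> \<beta> t" for v s t
    proof (cases "v \<in> V1")
      case True
      then have nv2: "v \<notin> V2" using V by auto
      have "s \<in> e1 ` N1" using that(2,4) nv2 unfolding N_def by (auto simp: \<beta>e2 dest: b2s)
      then obtain s' where s': "s' \<in> N1" "s = e1 s'" by auto
      have "t \<in> e1 ` N1" using that(3,5) nv2 unfolding N_def by (auto simp: \<beta>e2 dest: b2s)
      then obtain t' where t': "t' \<in> N1" "t = e1 t'" by auto
      have "(s', t') \<in> (F1 \<inter> {x. v \<in> \<beta>1 x} \<times> {x. v \<in> \<beta>1 x})\<^sup>*"
        using T1 True s' t' that(4,5) by (auto simp: \<beta>e1)
      from rtrancl_map_prod[OF this, of e1]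
      have "(s, t) \<in> (map_prod e1 e1 ` (F1 \<inter> {x. v \<in> \<beta>1 x} \<times> {x. v \<in> \<beta>1 x}))\<^sup>*" using s' t' by simp
      moreover have "map_prod e1 e1 ` (F1 \<inter> {x. v \<in> \<beta>1 x} \<times> {x. v \<in> \<beta>1 x}) \<subseteq> F \<inter> {x. v \<in> \<beta> x} \<times> {x. v \<in> \<beta> x}"
        unfolding F_def F1'_def by (auto simp: \<beta>e1)
      ultimately show ?thesis using rtrancl_mono by blast
    next
      case False
      then have v2: "v \<in> V2" using that V by auto
      have nv1: "v \<notin> V1" using False .
      have "s \<in> e2 ` N2" using that(2,4) nv1 unfolding N_def by (auto simp: \<beta>e1 dest: b1s)
      then obtain s' where s': "s' \<in> N2" "s = e2 s'" by auto
      have "t \<in> e2 ` N2" using that(3,5) nv1 unfolding N_def by (auto simp: \<beta>e1 dest: b1s)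
      then obtain t' where t': "t' \<in> N2" "t = e2 t'" by auto
      have "(s', t') \<in> (F2 \<inter> {x. v \<in> \<beta>2 x} \<times> {x. v \<in> \<beta>2 x})\<^sup>*"
        using T2 v2 s' t' that(4,5) by (auto simp: \<beta>e2)
      from rtrancl_map_prod[OF this, of e2]
      have "(s, t) \<in> (map_prod e2 e2 ` (F2 \<inter> {x. v \<in> \<beta>2 x} \<times> {x. v \<in> \<beta>2 x}))\<^sup>*" using s' t' by simp
      moreover have "map_prod e2 e2 ` (F2 \<inter> {x. v \<in> \<beta>2 x} \<times> {x. v \<in> \<beta>2 x}) \<subseteq> F \<inter> {x. v \<in> \<beta> x} \<times> {x. v \<in> \<beta> x}"
        unfolding F_def F2'_def by (auto simp: \<beta>e2)
      ultimately show ?thesis using rtrancl_mono by blast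
    qed
  qed
  have "\<forall>t\<in>N. card (\<beta> t) \<le> k + 1" using D1(2) D2(2) unfolding N_def by (auto simp: \<beta>e1 \<beta>e2)
  then show ?thesis unfolding decomp_le_def using td by blast
qed

lemma induced_induced: "S \<subseteq> T \<Longrightarrow> induced (induced K T) S = induced K S"
  unfolding induced_def by auto

lemma wf_induced: "wf_graph K \<Longrightarrow> S \<subseteq> fst K \<Longrightarrow> wf_graph (induced K S)"
  unfolding wf_graph_def induced_def by (auto intro: finite_subset)

lemma decomp_empty:
  assumes "wf_graph K" "fst K = {}"
  shows "decomp_le K k"
  using decomp_le_exists[OF assms(1)] assms(2) decomp_le_mono by fastforce

lemma decomp_partition:
  assumes "finite I"
  shows "wf_graph K \<Longrightarrow> lab ` fst K \<subseteq> I \<Longrightarrow> (\<And>u v. (u, v) \<in> snd K \<Longrightarrow> lab u = lab v)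
    \<Longrightarrow> (\<And>i. i \<in> I \<Longrightarrow> decomp_le (induced K {v\<in>fst K. lab v = i}) k) \<Longrightarrow> decomp_le K k"
  using assms
proof (induction I arbitrary: K rule: finite_induct)
  case empty
  then show ?case using decomp_empty by auto
next
  case (insert i I)
  define V1 where "V1 = {v\<in>fst K. lab v \<noteq> i}"
  define V2 where "V2 = {v\<in>fst K. lab v = i}"
  have wf: "wf_graph K" using insert by simp
  have E: "(u \<in> V1 \<and> v \<in> V1) \<or> (u \<in> V2 \<and> v \<in> V2)" if "(u, v) \<in> snd K" for u v
    using insert.prems(3)[OF that] that wf unfolding V1_def V2_def wf_graph_def by auto
  have d1: "decomp_le (induced K V1) k"
  proof (rule insert.IH)
    show "wf_graph (induced K V1)" using wf_induced[OF wf] unfolding V1_def by auto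
    show "lab ` fst (induced K V1) \<subseteq> I" using insert.prems(2) unfolding V1_def induced_def by auto
    show "lab u = lab v" if "(u, v) \<in> snd (induced K V1)" for u v
      using insert.prems(3) that unfolding induced_def by auto
    show "decomp_le (induced (induced K V1) {v \<in> fst (induced K V1). lab v = j}) k" if "j \<in> I" for j
    proof -
      have "{v \<in> fst (induced K V1). lab v = j} = {v\<in>fst K. lab v = j}"
        using that insert.hyps(2) unfolding induced_def V1_def by auto
      moreover have "{v\<in>fst K. lab v = j} \<subseteq> V1" using that insert.hyps(2) unfolding V1_def by auto
      ultimately show ?thesis using insert.prems(4)[of j] that induced_induced by simp
    qed
  qed
  have d2: "decomp_le (induced K V2) k" using insert.prems(4)[of i] unfolding V2_def by simp
  show ?case
    by (rule merge2[OF wf _ _ E d1 d2]) (auto simp: V1_def V2_def)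
qed

lemma decomp_single:
  assumes "wf_graph K" "card (fst K) \<le> 1"
  shows "decomp_le K k"
  using decomp_trivial[OF assms(1)] assms(2) unfolding decomp_le_def by fastforce

definition encx :: "nat \<Rightarrow> nat \<Rightarrow> nat" where "encx i a = prod_encode (i, a)"
definition ixx :: "nat \<Rightarrow> nat" where "ixx x = fst (prod_decode x)"
definition elx :: "nat \<Rightarrow> nat" where "elx x = snd (prod_decode x)"

lemma encx_simps[simp]: "ixx (encx i a) = i" "elx (encx i a) = a"
  unfolding encx_def ixx_def elx_def by simp_all

lemma encx_elx: "encx (ixx x) (elx x) = x"
  unfolding encx_def ixx_def elx_def by simp

lemma inj_encx: "inj (encx i)"
  unfolding inj_def encx_def by simp

definition restrA :: "vstruct \<Rightarrow> nat set \<Rightarrow> vstruct" where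
  "restrA A Y = (fst A, \<lambda>f ys. if set ys \<inter> Y = {} then snd A f ys else 0)"

definition mixB :: "vstruct \<Rightarrow> nat \<Rightarrow> (nat \<Rightarrow> nat set) \<Rightarrow> (nat \<Rightarrow> real) \<Rightarrow> vstruct" where
  "mixB A m Y q = ((\<lambda>(i, a). encx i a) ` ({..<m} \<times> fst A),
     \<lambda>f xs. \<Sum>i<m. if (\<forall>x\<in>set xs. ixx x = i) \<and> set (map elx xs) \<inter> Y i = {}
                   then q i * snd A f (map elx xs) else 0)"

lemma tuples_finite: "finite A \<Longrightarrow> finite (tuples A n)"
  unfolding tuples_def using finite_lists_length_eq[of A n] by (simp add: conj_commute)

lemma mix_inner:
  "(\<Sum>xs\<in>tuples (fst (mixB A m Y q)) n.
      (if (\<forall>x\<in>set xs. ixx x = i) \<and> set (map elx xs) \<inter> Y i = {} then q i * snd A f (map elx xs) else 0)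
      * c xs)
   = (\<Sum>ys\<in>tuples (fst A) n. q i * snd (restrA A (Y i)) f ys * c (map (encx i) ys))"
  if "i < m" "finite (fst A)"
proof -
  let ?D = "fst (mixB A m Y q)"
  let ?T = "{xs \<in> tuples ?D n. \<forall>x\<in>set xs. ixx x = i}"
  let ?g = "\<lambda>xs. (if (\<forall>x\<in>set xs. ixx x = i) \<and> set (map elx xs) \<inter> Y i = {} then q i * snd A f (map elx xs) else 0) * c xs"
  have D: "?D = (\<lambda>(i, a). encx i a) ` ({..<m} \<times> fst A)" unfolding mixB_def by simp
  have finD: "finite ?D" using that(2) D by simp
  have "(\<Sum>xs\<in>tuples ?D n. ?g xs) = (\<Sum>xs\<in>?T. ?g xs)"
    by (rule sum.mono_neutral_right) (use finD tuples_finite in auto)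
  also have "\<dots> = (\<Sum>ys\<in>tuples (fst A) n. ?g (map (encx i) ys))"
  proof (rule sum.reindex_bij_betw[symmetric])
    show "bij_betw (map (encx i)) (tuples (fst A) n) ?T"
    proof (rule bij_betwI')
      show "(map (encx i) x = map (encx i) y) = (x = y)" for x y
        using inj_encx[of i] by (simp add: inj_map_eq_map)
      show "map (encx i) x \<in> ?T" if "x \<in> tuples (fst A) n" for x
        using that \<open>i < m\<close> unfolding tuples_def D by auto
      show "\<exists>x\<in>tuples (fst A) n. y = map (encx i) x" if "y \<in> ?T" for y
      proof (intro bexI[of _ "map elx y"])
        show "y = map (encx i) (map elx y)"
          using that by (auto intro!: map_idI[symmetric] simp: encx_elx[of x, simplified] ) (metis encx_elx)
        show "map elx y \<in> tuples (fst A) n" using that unfolding tuples_def D by auto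
      qed
    qed
  qed
  also have "\<dots> = (\<Sum>ys\<in>tuples (fst A) n. q i * snd (restrA A (Y i)) f ys * c (map (encx i) ys))"
    by (intro sum.cong refl) (auto simp: restrA_def comp_def)
  finally show ?thesis .
qed

lemma sval_mix:
  assumes "finite (fst A)"
  shows "sval \<sigma> (mixB A m Y q) C h = (\<Sum>i<m. q i * sval \<sigma> (restrA A (Y i)) C (h \<circ> encx i))"
proof -
  let ?D = "fst (mixB A m Y q)"
  let ?t = "\<lambda>i f xs. (if (\<forall>x\<in>set xs. ixx x = i) \<and> set (map elx xs) \<inter> Y i = {} then q i * snd A f (map elx xs) else 0)"
  have "sval \<sigma> (mixB A m Y q) C h = (\<Sum>f\<in>fst \<sigma>. \<Sum>xs\<in>tuples ?D (snd \<sigma> f). (\<Sum>i<m. ?t i f xs) * snd C f (map h xs))"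
    unfolding sval_def by (simp add: mixB_def)
  also have "\<dots> = (\<Sum>f\<in>fst \<sigma>. \<Sum>i<m. \<Sum>xs\<in>tuples ?D (snd \<sigma> f). ?t i f xs * snd C f (map h xs))"
    by (simp add: sum_distrib_right sum.swap[of _ "{..<m}"])
  also have "\<dots> = (\<Sum>f\<in>fst \<sigma>. \<Sum>i<m. \<Sum>ys\<in>tuples (fst A) (snd \<sigma> f). q i * snd (restrA A (Y i)) f ys * snd C f (map h (map (encx i) ys)))"
    by (intro sum.cong refl mix_inner[OF _ assms]) auto
  also have "\<dots> = (\<Sum>i<m. q i * sval \<sigma> (restrA A (Y i)) C (h \<circ> encx i))"
    unfolding sval_def by (simp add: sum.swap[of _ "fst \<sigma>"] sum_distrib_left mult.assoc restrA_def)
  finally show ?thesis .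
qed

lemma sval_restr_le:
  assumes "is_struct \<sigma> A" "is_struct \<sigma> C"
  shows "sval \<sigma> (restrA A Y) C g \<le> sval \<sigma> A C g"
proof -
  have "\<And>f xs. 0 \<le> snd A f xs" "\<And>f xs. 0 \<le> snd C f xs" using assms unfolding is_struct_def by auto
  then show ?thesis unfolding sval_def restrA_def by (auto intro!: sum_mono mult_right_mono)
qed

lemma mix_upper:
  assumes A: "is_struct \<sigma> A" and C: "is_struct \<sigma> C" and q: "\<forall>i<m. 0 \<le> q i" and sq: "(\<Sum>i<m. q i) \<le> 1"
    and h: "\<forall>x\<in>fst (mixB A m Y q). h x \<in> fst C"
  shows "sval \<sigma> (mixB A m Y q) C h \<le> sopt \<sigma> A C"
proof -
  have fA: "finite (fst A)" "finite (fst C)" using A C unfolding is_struct_def by auto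
  have "sval \<sigma> (restrA A (Y i)) C (h \<circ> encx i) \<le> sopt \<sigma> A C" if "i < m" for i
  proof -
    have "\<forall>a\<in>fst A. (h \<circ> encx i) a \<in> fst C" using h that unfolding mixB_def by force
    then have "sval \<sigma> A C (h \<circ> encx i) \<le> sopt \<sigma> A C" using sopt_ge fA by blast
    then show ?thesis using sval_restr_le[OF A C] order_trans by blast
  qed
  then have "(\<Sum>i<m. q i * sval \<sigma> (restrA A (Y i)) C (h \<circ> encx i)) \<le> (\<Sum>i<m. q i * sopt \<sigma> A C)"
    using q by (intro sum_mono mult_left_mono) auto
  also have "\<dots> = (\<Sum>i<m. q i) * sopt \<sigma> A C" by (simp add: sum_distrib_right)
  also have "\<dots> \<le> sopt \<sigma> A C" using sq sopt_nonneg[OF A C]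
    by (metis mult.commute mult_left_le)
  finally show ?thesis using sval_mix[OF fA(1)] by simp
qed

lemma indicator_union_le:
  assumes "finite S"
  shows "(if S \<inter> Y = {} then 0 else (1::real)) \<le> (\<Sum>a\<in>S. if a \<in> Y then 1 else 0)"
proof (cases "S \<inter> Y = {}")
  case True then show ?thesis by (simp add: sum_nonneg)
next
  case False
  then obtain a where a: "a \<in> S" "a \<in> Y" by auto
  have "(1::real) = (if a \<in> Y then 1 else 0)" using a by simp
  also have "\<dots> \<le> (\<Sum>a\<in>S. if a \<in> Y then 1 else 0)"
    using a assms by (intro member_le_sum) auto
  finally show ?thesis using False by simp
qed

lemma wgt_lower:
  fixes q :: "nat \<Rightarrow> real" and r :: nat
  assumes q: "\<forall>i<m. 0 \<le> q i" and sq: "1 - \<eta> \<le> (\<Sum>i<m. q i)"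
    and thin: "\<forall>a\<in>S. (\<Sum>i<m. if a \<in> Y i then q i else 0) \<le> \<epsilon>f"
    and S: "finite S" "card S \<le> r" and ef: "\<epsilon>f \<ge> 0"
  shows "(\<Sum>i<m. if S \<inter> Y i = {} then q i else 0) \<ge> 1 - \<eta> - real r * \<epsilon>f"
proof -
  have "(\<Sum>i<m. if S \<inter> Y i = {} then 0 else q i) \<le> (\<Sum>i<m. q i * (\<Sum>a\<in>S. if a \<in> Y i then 1 else 0))"
  proof (intro sum_mono)
    fix i assume "i \<in> {..<m}"
    have ind: "(if S \<inter> Y i = {} then 0 else (1::real)) \<le> (\<Sum>a\<in>S. if a \<in> Y i then (1::real) else 0)"
      by (rule indicator_union_le[OF S(1)])
    have "q i * (if S \<inter> Y i = {} then 0 else 1) \<le> q i * (\<Sum>a\<in>S. if a \<in> Y i then 1 else 0)"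
      by (rule mult_left_mono[OF ind]) (use q \<open>i \<in> {..<m}\<close> in auto)
    then show "(if S \<inter> Y i = {} then 0 else q i) \<le> q i * (\<Sum>a\<in>S. if a \<in> Y i then 1 else 0)"
      by (simp split: if_splits)
  qed
  also have "\<dots> = (\<Sum>a\<in>S. \<Sum>i<m. if a \<in> Y i then q i else 0)"
    by (simp add: sum_distrib_left sum.swap[of _ S] if_distrib cong: if_cong)
  also have "\<dots> \<le> (\<Sum>a\<in>S. \<epsilon>f)" using thin by (intro sum_mono) auto
  also have "\<dots> \<le> real r * \<epsilon>f" using S ef by (simp add: mult_right_mono)
  finally have hit: "(\<Sum>i<m. if S \<inter> Y i = {} then 0 else q i) \<le> real r * \<epsilon>f" .
  have "(\<Sum>i<m. q i) = (\<Sum>i<m. if S \<inter> Y i = {} then q i else 0) + (\<Sum>i<m. if S \<inter> Y i = {} then 0 else q i)"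
    by (simp add: sum.distrib[symmetric] cong: if_cong) (intro sum.cong, auto)
  then show ?thesis using hit sq by linarith
qed

lemma mix_lower:
  fixes q :: "nat \<Rightarrow> real" and r :: nat
  assumes A: "is_struct \<sigma> A" and C: "is_struct \<sigma> C" and ar: "\<forall>f\<in>fst \<sigma>. snd \<sigma> f \<le> r"
    and q: "\<forall>i<m. 0 \<le> q i" and sq: "1 - \<eta> \<le> (\<Sum>i<m. q i)"
    and thin: "\<forall>a\<in>fst A. (\<Sum>i<m. if a \<in> Y i then q i else 0) \<le> \<epsilon>f" and ef: "\<epsilon>f \<ge> 0"
  shows "sval \<sigma> (mixB A m Y q) C (hs \<circ> elx) \<ge> (1 - \<eta> - real r * \<epsilon>f) * sval \<sigma> A C hs"
proof -
  have fA: "finite (fst A)" using A unfolding is_struct_def by auto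
  have Apos: "\<And>f xs. 0 \<le> snd A f xs" and Cpos: "\<And>f xs. 0 \<le> snd C f xs"
    using A C unfolding is_struct_def by auto
  let ?w = "\<lambda>ys. (\<Sum>i<m. if set ys \<inter> Y i = {} then q i else 0)"
  have "sval \<sigma> (mixB A m Y q) C (hs \<circ> elx) = (\<Sum>i<m. q i * sval \<sigma> (restrA A (Y i)) C hs)"
    unfolding sval_mix[OF fA] by (simp add: comp_def)
  also have "\<dots> = (\<Sum>f\<in>fst \<sigma>. \<Sum>ys\<in>tuples (fst A) (snd \<sigma> f). snd A f ys * snd C f (map hs ys) * ?w ys)"
  proof -
    have "(\<Sum>i<m. q i * sval \<sigma> (restrA A (Y i)) C hs) = (\<Sum>i<m. \<Sum>f\<in>fst \<sigma>. \<Sum>ys\<in>tuples (fst A) (snd \<sigma> f).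
            snd A f ys * snd C f (map hs ys) * (if set ys \<inter> Y i = {} then q i else 0))"
      unfolding sval_def restrA_def sum_distrib_left by (intro sum.cong refl) auto
    also have "\<dots> = (\<Sum>f\<in>fst \<sigma>. \<Sum>i<m. \<Sum>ys\<in>tuples (fst A) (snd \<sigma> f).
            snd A f ys * snd C f (map hs ys) * (if set ys \<inter> Y i = {} then q i else 0))"
      by (rule sum.swap)
    also have "\<dots> = (\<Sum>f\<in>fst \<sigma>. \<Sum>ys\<in>tuples (fst A) (snd \<sigma> f). \<Sum>i<m.
            snd A f ys * snd C f (map hs ys) * (if set ys \<inter> Y i = {} then q i else 0))"
      by (intro sum.cong refl) (rule sum.swap)
    also have "\<dots> = (\<Sum>f\<in>fst \<sigma>. \<Sum>ys\<in>tuples (fst A) (snd \<sigma> f). snd A f ys * snd C f (map hs ys) * ?w ys)"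
      by (simp only: sum_distrib_left)
    finally show ?thesis .
  qed
  also have "\<dots> \<ge> (\<Sum>f\<in>fst \<sigma>. \<Sum>ys\<in>tuples (fst A) (snd \<sigma> f). snd A f ys * snd C f (map hs ys) * (1 - \<eta> - real r * \<epsilon>f))"
  proof (intro sum_mono mult_left_mono)
    fix f ys assume f: "f \<in> fst \<sigma>" and ys: "ys \<in> tuples (fst A) (snd \<sigma> f)"
    show "0 \<le> snd A f ys * snd C f (map hs ys)" using Apos Cpos by simp
    have "card (set ys) \<le> r" using ys ar f card_length[of ys] unfolding tuples_def by fastforce
    moreover have "\<forall>a\<in>set ys. (\<Sum>i<m. if a \<in> Y i then q i else 0) \<le> \<epsilon>f" using thin ys unfolding tuples_def by auto
    ultimately show "1 - \<eta> - real r * \<epsilon>f \<le> ?w ys" using wgt_lower[OF q sq _ _ _ ef] by blast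
  qed
  also have "(\<Sum>f\<in>fst \<sigma>. \<Sum>ys\<in>tuples (fst A) (snd \<sigma> f). snd A f ys * snd C f (map hs ys) * (1 - \<eta> - real r * \<epsilon>f))
     = (1 - \<eta> - real r * \<epsilon>f) * sval \<sigma> A C hs"
    unfolding sval_def sum_distrib_left by (intro sum.cong refl) (simp add: mult.commute)
  finally show ?thesis by (simp add: comp_def)
qed

lemma mix_dom: "fst (mixB A m Y q) = (\<lambda>(i, a). encx i a) ` ({..<m} \<times> fst A)"
  unfolding mixB_def by simp

lemma mix_val: "snd (mixB A m Y q) f xs = (\<Sum>i<m. if (\<forall>x\<in>set xs. ixx x = i) \<and> set (map elx xs) \<inter> Y i = {}
                   then q i * snd A f (map elx xs) else 0)"
  unfolding mixB_def by simp

lemma mix_struct: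
  assumes A: "is_struct \<sigma> A" and m: "m > 0" and q: "\<forall>i<m. q i \<in> \<rat> \<and> q i \<ge> 0"
  shows "is_struct \<sigma> (mixB A m Y q)"
proof -
  have fA: "finite (fst A)" "fst A \<noteq> {}" and Apos: "\<And>f xs. 0 \<le> snd A f xs" and AQ: "\<And>f xs. snd A f xs \<in> \<rat>"
    and Asup: "\<And>f xs. snd A f xs \<noteq> 0 \<Longrightarrow> f \<in> fst \<sigma> \<and> xs \<in> tuples (fst A) (snd \<sigma> f)"
    using A unfolding is_struct_def by auto
  show ?thesis unfolding is_struct_def
  proof (intro conjI allI impI)
    show "finite (fst (mixB A m Y q))" using fA unfolding mix_dom by simp
    show "fst (mixB A m Y q) \<noteq> {}" using fA m unfolding mix_dom by auto
    fix f xs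
    show "snd (mixB A m Y q) f xs \<in> \<rat>" unfolding mix_val using q AQ by (intro Rats_sum) auto
    show "0 \<le> snd (mixB A m Y q) f xs" unfolding mix_val using q Apos by (intro sum_nonneg) auto
    assume ne: "snd (mixB A m Y q) f xs \<noteq> 0"
    then obtain i where "i \<in> {..<m}" "(if (\<forall>x\<in>set xs. ixx x = i) \<and> set (map elx xs) \<inter> Y i = {}
                   then q i * snd A f (map elx xs) else 0) \<noteq> 0"
      unfolding mix_val by (rule sum.not_neutral_contains_not_neutral)
    then have i: "i < m" "(\<forall>x\<in>set xs. ixx x = i)" "snd A f (map elx xs) \<noteq> 0"
      by (auto split: if_splits)
    then have fs: "f \<in> fst \<sigma>" "map elx xs \<in> tuples (fst A) (snd \<sigma> f)" using Asup by auto
    show "f \<in> fst \<sigma>" using fs by simp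
    have "x \<in> fst (mixB A m Y q)" if "x \<in> set xs" for x
    proof -
      have "elx x \<in> fst A" using fs that unfolding tuples_def by auto
      then have "encx (ixx x) (elx x) \<in> fst (mixB A m Y q)" using i that unfolding mix_dom by auto
      then show ?thesis by (simp add: encx_elx)
    qed
    then show "xs \<in> tuples (fst (mixB A m Y q)) (snd \<sigma> f)" using fs unfolding tuples_def by auto
  qed
qed

lemma wf_gaifman:
  assumes "is_struct \<sigma> A" shows "wf_graph (gaifman A)"
proof -
  have sup: "set xs \<subseteq> fst A" if "snd A f xs > 0" for f xs
  proof -
    have "snd A f xs \<noteq> 0" using that by simp
    then show ?thesis using assms unfolding is_struct_def tuples_def by blast
  qed
  show ?thesis using assms sup unfolding wf_graph_def gaifman_def is_struct_def by auto
qed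

lemma mix_edge:
  assumes A: "is_struct \<sigma> A" and uv: "(u, v) \<in> snd (gaifman (mixB A m Y q))"
    and q: "\<forall>i<m. q i \<ge> 0"
  shows "\<exists>i<m. ixx u = i \<and> ixx v = i \<and> elx u \<notin> Y i \<and> elx v \<notin> Y i \<and> (elx u, elx v) \<in> snd (gaifman A)"
proof -
  have Apos: "\<And>f xs. 0 \<le> snd A f xs" using A unfolding is_struct_def by auto
  obtain f xs where fx: "u \<noteq> v" "snd (mixB A m Y q) f xs > 0" "u \<in> set xs" "v \<in> set xs"
    using uv unfolding gaifman_def by auto
  then obtain i where i: "i < m" "(\<forall>x\<in>set xs. ixx x = i)" "set (map elx xs) \<inter> Y i = {}" "q i * snd A f (map elx xs) > 0"
    unfolding mix_val
  proof -
    have "snd (mixB A m Y q) f xs \<noteq> 0" using fx(2) by simp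
    then obtain i where i: "i \<in> {..<m}" "(if (\<forall>x\<in>set xs. ixx x = i) \<and> set (map elx xs) \<inter> Y i = {}
                   then q i * snd A f (map elx xs) else 0) \<noteq> 0"
      unfolding mix_val by (rule sum.not_neutral_contains_not_neutral)
    have "q i * snd A f (map elx xs) \<ge> 0" using q i(1) Apos by simp
    then show ?thesis using i by (intro that[of i]) (auto split: if_splits)
  qed
  have "q i \<ge> 0" using q i(1) by simp
  then have Ap: "snd A f (map elx xs) > 0" using i(4) by (auto simp: zero_less_mult_iff)
  have "elx u \<noteq> elx v"
  proof
    assume "elx u = elx v"
    then have "encx (ixx u) (elx u) = encx (ixx v) (elx v)" using i fx by simp
    then show False using fx(1) by (simp only: encx_elx)
  qed
  then have "(elx u, elx v) \<in> snd (gaifman A)" using Ap fx unfolding gaifman_def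
    by simp (intro exI[of _ f] exI[of _ "map elx xs"], auto)
  then show ?thesis using i fx by auto
qed

lemma mix_tw:
  assumes A: "is_struct \<sigma> A" and m: "m > 0" and q: "\<forall>i<m. q i \<in> \<rat> \<and> q i \<ge> 0"
    and tw: "\<forall>i<m. treewidth (del_verts (gaifman A) (Y i)) \<le> k"
  shows "treewidth (gaifman (mixB A m Y q)) \<le> k"
proof -
  let ?B = "mixB A m Y q"
  let ?K = "gaifman ?B"
  have Bs: "is_struct \<sigma> ?B" by (rule mix_struct[OF A m q])
  have wfK: "wf_graph ?K" by (rule wf_gaifman[OF Bs])
  have wfA: "wf_graph (gaifman A)" by (rule wf_gaifman[OF A])
  have fK: "fst ?K = fst ?B" unfolding gaifman_def by simp
  define lab where "lab = (\<lambda>x. if elx x \<in> Y (ixx x) then (1::nat, x) else (0, ixx x))"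
  have q0: "\<forall>i<m. q i \<ge> 0" using q by auto
  have "decomp_le ?K k"
  proof (rule decomp_partition[of "lab ` fst ?K"])
    show "finite (lab ` fst ?K)" using wfK unfolding wf_graph_def by simp
    show "wf_graph ?K" by (rule wfK)
    show "lab ` fst ?K \<subseteq> lab ` fst ?K" by simp
    show "lab u = lab v" if "(u, v) \<in> snd ?K" for u v
      using mix_edge[OF A that q0] unfolding lab_def by auto
    show "decomp_le (induced ?K {v \<in> fst ?K. lab v = j}) k" if jI: "j \<in> lab ` fst ?K" for j
    proof -
      obtain x where x: "x \<in> fst ?K" "j = lab x" using jI by auto
      show ?thesis
      proof (cases "elx x \<in> Y (ixx x)")
        case True
        then have "{v \<in> fst ?K. lab v = j} \<subseteq> {x}" using x unfolding lab_def by (auto split: if_splits)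
        then have "card {v \<in> fst ?K. lab v = j} \<le> 1" using card_mono[of "{x}"] by fastforce
        then show ?thesis using wf_induced[OF wfK] by (intro decomp_single) (auto simp: induced_def)
      next
        case False
        define i where "i = ixx x"
        have j: "j = (0, i)" using x False unfolding lab_def i_def by simp
        have im: "i < m" using x(1) unfolding fK mix_dom i_def by auto
        define S where "S = {v \<in> fst ?K. lab v = j}"
        have S: "S = {v \<in> fst ?K. ixx v = i \<and> elx v \<notin> Y i}"
          unfolding S_def j lab_def by auto
        have wfS: "wf_graph (induced ?K S)" using wf_induced[OF wfK] unfolding S_def by auto
        have wfD: "wf_graph (del_verts (gaifman A) (Y i))" by (rule wf_del_verts[OF wfA])
        have "treewidth (induced ?K S) \<le> treewidth (del_verts (gaifman A) (Y i))"
        proof (rule tw_embed[OF wfS wfD])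
          show "inj_on elx (fst (induced ?K S))"
          proof (rule inj_onI)
            fix u v assume "u \<in> fst (induced ?K S)" "v \<in> fst (induced ?K S)" "elx u = elx v"
            then have "encx (ixx u) (elx u) = encx (ixx v) (elx v)" unfolding induced_def S by auto
            then show "u = v" by (simp only: encx_elx)
          qed
          show "elx ` fst (induced ?K S) \<subseteq> fst (del_verts (gaifman A) (Y i))"
            unfolding induced_def S del_verts_def gaifman_def fK mix_dom by auto
          show "(elx u, elx v) \<in> snd (del_verts (gaifman A) (Y i))" if "(u, v) \<in> snd (induced ?K S)" for u v
          proof -
            have uv: "(u, v) \<in> snd ?K" "u \<in> S" "v \<in> S" using that unfolding induced_def by auto
            obtain i' where "i' < m" "ixx u = i'" "ixx v = i'" "(elx u, elx v) \<in> snd (gaifman A)"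
              using mix_edge[OF A uv(1) q0] by blast
            moreover have "elx u \<notin> Y i" "elx v \<notin> Y i" using uv(2,3) unfolding S by auto
            moreover have "elx u \<in> fst A" "elx v \<in> fst A" using calculation(4) wfA unfolding wf_graph_def gaifman_def by auto
            ultimately show ?thesis unfolding del_verts_def gaifman_def by auto
          qed
        qed
        then have "treewidth (induced ?K S) \<le> k" using tw im by (meson order_trans)
        then show ?thesis using tw_le_iff[OF wfS] unfolding S_def by simp
      qed
    qed
  qed
  then show ?thesis using tw_le_iff[OF wfK] by simp
qed

lemma iso_tw:
  assumes G: "is_graph G" and A: "is_struct \<sigma> A" and phi: "bij_betw \<phi> (fst A) (fst G)"
    and iso: "\<forall>u\<in>fst A. \<forall>v\<in>fst A. (u, v) \<in> snd (gaifman A) \<longleftrightarrow> (\<phi> u, \<phi> v) \<in> snd G"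
  shows "treewidth (del_verts (gaifman A) {a\<in>fst A. \<phi> a \<in> X}) \<le> treewidth (del_verts G X)"
proof (rule tw_embed)
  show "wf_graph (del_verts (gaifman A) {a \<in> fst A. \<phi> a \<in> X})" by (rule wf_del_verts[OF wf_gaifman[OF A]])
  show "wf_graph (del_verts G X)" by (rule wf_del_verts[OF is_graph_wf[OF G]])
  show "inj_on \<phi> (fst (del_verts (gaifman A) {a \<in> fst A. \<phi> a \<in> X}))"
    using phi unfolding bij_betw_def del_verts_def gaifman_def by (auto intro: inj_on_subset)
  show "\<phi> ` fst (del_verts (gaifman A) {a \<in> fst A. \<phi> a \<in> X}) \<subseteq> fst (del_verts G X)"
    using phi unfolding bij_betw_def del_verts_def gaifman_def by auto
  show "(\<phi> u, \<phi> v) \<in> snd (del_verts G X)"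
    if "(u, v) \<in> snd (del_verts (gaifman A) {a \<in> fst A. \<phi> a \<in> X})" for u v
  proof -
    have uv: "(u, v) \<in> snd (gaifman A)" "u \<in> fst A" "v \<in> fst A" "\<phi> u \<notin> X" "\<phi> v \<notin> X"
      using that unfolding del_verts_def by (auto simp: gaifman_def)
    then have "(\<phi> u, \<phi> v) \<in> snd G" using iso by blast
    moreover have "\<phi> u \<in> fst G" "\<phi> v \<in> fst G" using phi uv unfolding bij_betw_def by auto
    ultimately show ?thesis using uv unfolding del_verts_def by auto
  qed
qed

lemma rat_approx:
  fixes p :: real and d :: real
  assumes "p \<ge> 0" "d > 0"
  shows "\<exists>q. q \<in> \<rat> \<and> 0 \<le> q \<and> q \<le> p \<and> p - d \<le> q"
proof (cases "p \<le> d")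
  case True then show ?thesis using assms by (intro exI[of _ 0]) auto
next
  case False
  then obtain q where "q \<in> \<rat>" "p - d < q" "q < p" using Rats_dense_in_real[of "p - d" p] assms by auto
  then show ?thesis using False by (intro exI[of _ q]) auto
qed

lemma forward_one:
  fixes \<pi> :: "nat set pmf" and r :: nat
  assumes A: "is_struct \<sigma> A" and ar: "\<forall>f\<in>fst \<sigma>. snd \<sigma> f \<le> r"
    and G: "is_graph G" and phi: "bij_betw \<phi> (fst A) (fst G)"
    and iso: "\<forall>u\<in>fst A. \<forall>v\<in>fst A. (u, v) \<in> snd (gaifman A) \<longleftrightarrow> (\<phi> u, \<phi> v) \<in> snd G"
    and supp: "set_pmf \<pi> \<subseteq> {X. X \<subseteq> fst G \<and> treewidth (del_verts G X) \<le> k}"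
    and thinp: "\<forall>v\<in>fst G. measure_pmf.prob \<pi> {X. v \<in> X} \<le> \<epsilon>f"
    and rho: "0 < \<rho>" "\<rho> < 1" and ef: "\<epsilon>f \<ge> 0" "real r * \<epsilon>f \<le> \<rho> / 2"
  shows "\<exists>B. is_struct \<sigma> B \<and> treewidth (gaifman B) \<le> k \<and> d_opt \<sigma> A B \<le> ereal (- ln (1 - \<rho>))"
proof -
  define S where "S = set_pmf \<pi>"
  have fG: "finite (fst G)" using G unfolding is_graph_def by simp
  have "S \<subseteq> Pow (fst G)" using supp unfolding S_def by auto
  then have finS: "finite S" using fG finite_subset by blast
  have neS: "S \<noteq> {}" unfolding S_def by (rule set_pmf_not_empty)
  define m where "m = card S"
  have m: "m > 0" unfolding m_def using finS neS by (simp add: card_gt_0_iff)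
  obtain ix where ix: "bij_betw ix {0..<m} S" unfolding m_def using ex_bij_betw_nat_finite[OF finS] by blast
  have ix': "bij_betw ix {..<m} S" using ix by (simp add: atLeast0LessThan)
  define p where "p = (\<lambda>i. pmf \<pi> (ix i))"
  define Y where "Y = (\<lambda>i. {a\<in>fst A. \<phi> a \<in> ix i})"
  define \<eta> where "\<eta> = \<rho> / 2"
  have sump: "(\<Sum>i<m. p i) = 1"
  proof -
    have "(\<Sum>i<m. p i) = (\<Sum>X\<in>S. pmf \<pi> X)" unfolding p_def by (rule sum.reindex_bij_betw[OF ix'])
    also have "\<dots> = 1" using finS unfolding S_def by (intro sum_pmf_eq_1) auto
    finally show ?thesis .
  qed
  have thin: "(\<Sum>i<m. if a \<in> Y i then p i else 0) \<le> \<epsilon>f" if a: "a \<in> fst A" for a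
  proof -
    have "(\<Sum>i<m. if a \<in> Y i then p i else 0) = (\<Sum>X\<in>S. if \<phi> a \<in> X then pmf \<pi> X else 0)"
    proof -
      have "(\<Sum>i<m. if a \<in> Y i then p i else 0) = (\<Sum>i<m. (\<lambda>X. if \<phi> a \<in> X then pmf \<pi> X else 0) (ix i))"
        unfolding p_def Y_def using a by (intro sum.cong refl) auto
      also have "\<dots> = (\<Sum>X\<in>S. if \<phi> a \<in> X then pmf \<pi> X else 0)" by (rule sum.reindex_bij_betw[OF ix'])
      finally show ?thesis .
    qed
    also have "\<dots> = (\<Sum>X\<in>S \<inter> {X. \<phi> a \<in> X}. pmf \<pi> X)"
      using finS by (simp add: sum.inter_restrict)
    also have "\<dots> = measure_pmf.prob \<pi> (S \<inter> {X. \<phi> a \<in> X})"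
      using finS by (simp add: measure_measure_pmf_finite)
    also have "\<dots> = measure_pmf.prob \<pi> {X. \<phi> a \<in> X}"
      unfolding S_def using measure_Int_set_pmf[of \<pi> "{X. \<phi> a \<in> X}"] by (simp add: Int_commute)
    also have "\<dots> \<le> \<epsilon>f" using thinp phi a unfolding bij_betw_def by auto
    finally show ?thesis .
  qed
  have "\<forall>i. \<exists>q. q \<in> \<rat> \<and> 0 \<le> q \<and> q \<le> p i \<and> p i - \<eta> / m \<le> q"
    using rat_approx[of "p _" "\<eta> / m"] m rho unfolding p_def \<eta>_def by (auto simp: pmf_nonneg)
  then have "\<exists>q. \<forall>i. q i \<in> \<rat> \<and> 0 \<le> q i \<and> q i \<le> p i \<and> p i - \<eta> / m \<le> q i" by (rule choice)
  then obtain q where q: "\<And>i. q i \<in> \<rat> \<and> 0 \<le> q i \<and> q i \<le> p i \<and> p i - \<eta> / m \<le> q i" by blast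
  have "(\<Sum>i<m. q i) \<le> (\<Sum>i<m. p i)" using q by (intro sum_mono) auto
  then have sq1: "(\<Sum>i<m. q i) \<le> 1" using sump by simp
  have sq2: "1 - \<eta> \<le> (\<Sum>i<m. q i)"
  proof -
    have "(\<Sum>i<m. p i - \<eta> / m) \<le> (\<Sum>i<m. q i)" using q by (intro sum_mono) auto
    moreover have "(\<Sum>i<m. p i - \<eta> / m) = 1 - \<eta>" using sump m by (simp add: sum_subtractf)
    ultimately show ?thesis by simp
  qed
  have thinq: "\<forall>a\<in>fst A. (\<Sum>i<m. if a \<in> Y i then q i else 0) \<le> \<epsilon>f"
  proof
    fix a assume a: "a \<in> fst A"
    have "(\<Sum>i<m. if a \<in> Y i then q i else 0) \<le> (\<Sum>i<m. if a \<in> Y i then p i else 0)"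
      using q by (intro sum_mono) auto
    then show "(\<Sum>i<m. if a \<in> Y i then q i else 0) \<le> \<epsilon>f" using thin[OF a] by simp
  qed
  have qq: "\<forall>i<m. q i \<in> \<rat> \<and> q i \<ge> 0" using q by auto
  have q0: "\<forall>i<m. 0 \<le> q i" using q by auto
  have tw: "\<forall>i<m. treewidth (del_verts (gaifman A) (Y i)) \<le> k"
  proof (intro allI impI)
    fix i assume "i < m"
    then have "ix i \<in> S" using ix' unfolding bij_betw_def by auto
    then have "treewidth (del_verts G (ix i)) \<le> k" using supp unfolding S_def by auto
    then show "treewidth (del_verts (gaifman A) (Y i)) \<le> k"
      unfolding Y_def using iso_tw[OF G A phi iso, of "ix i"] by simp
  qed
  define B where "B = mixB A m Y q"
  have Bs: "is_struct \<sigma> B" unfolding B_def by (rule mix_struct[OF A m qq])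
  have Btw: "treewidth (gaifman B) \<le> k" unfolding B_def by (rule mix_tw[OF A m qq tw])
  have "d_opt \<sigma> A B \<le> ereal (- ln (1 - \<rho>))"
  proof (rule dopt_le_from)
    show "0 \<le> \<rho>" "\<rho> < 1" using rho by auto
    show "sopt \<sigma> B C \<ge> 0" if "is_struct \<sigma> C" for C using sopt_nonneg[OF Bs that] .
    fix C assume C: "is_struct \<sigma> C"
    have fin: "finite (fst A)" "finite (fst B)" "finite (fst C)" "fst C \<noteq> {}"
      using A Bs C unfolding is_struct_def by auto
    obtain h where h: "\<forall>x\<in>fst B. h x \<in> fst C" "sopt \<sigma> B C = sval \<sigma> B C h"
      using sopt_attained[OF fin(2,3,4)] by blast
    have up: "sopt \<sigma> B C \<le> sopt \<sigma> A C"
      using h mix_upper[OF A C q0 sq1] unfolding B_def by simp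
    obtain hs where hs: "\<forall>x\<in>fst A. hs x \<in> fst C" "sopt \<sigma> A C = sval \<sigma> A C hs"
      using sopt_attained[OF fin(1,3,4)] by blast
    have hsB: "\<forall>x\<in>fst B. (hs \<circ> elx) x \<in> fst C" using hs(1) unfolding B_def mix_dom by auto
    have "(1 - \<rho>) * sopt \<sigma> A C \<le> (1 - \<eta> - real r * \<epsilon>f) * sopt \<sigma> A C"
      using sopt_nonneg[OF A C] ef unfolding \<eta>_def by (intro mult_right_mono) auto
    also have "\<dots> \<le> sval \<sigma> B C (hs \<circ> elx)"
      using mix_lower[OF A C ar q0 sq2 thinq ef(1)] hs(2) unfolding B_def by simp
    also have "\<dots> \<le> sopt \<sigma> B C" using sopt_ge[OF fin(2,3) hsB] .
    finally show "sopt \<sigma> B C \<le> sopt \<sigma> A C \<and> (1 - \<rho>) * sopt \<sigma> A C \<le> sopt \<sigma> B C" using up by simp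
  qed
  then show ?thesis using Bs Btw by blast
qed

lemma forward:
  fixes \<G> :: "graph set" and r :: nat
  assumes graphs: "\<forall>G\<in>\<G>. is_graph G" and r: "r \<ge> 2" and frag: "frac_tw_fragile \<G>"
  shows "tw_pliable (A_class \<G> r)"
  unfolding tw_pliable_def
proof (intro allI impI)
  fix \<epsilon> :: real assume e: "\<epsilon> > 0"
  define \<rho> where "\<rho> = 1 - exp (- \<epsilon>)"
  have rho: "0 < \<rho>" "\<rho> < 1" unfolding \<rho>_def using e by auto
  have lnr: "- ln (1 - \<rho>) = \<epsilon>" unfolding \<rho>_def by simp
  define ef where "ef = \<rho> / (2 * real r)"
  have efp: "ef > 0" unfolding ef_def using rho r by simp
  have efr: "real r * ef \<le> \<rho> / 2" unfolding ef_def using r by simp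
  obtain k where k: "\<forall>G\<in>\<G>. \<exists>\<pi> :: nat set pmf.
      set_pmf \<pi> \<subseteq> {X. X \<subseteq> fst G \<and> treewidth (del_verts G X) \<le> k}
    \<and> (\<forall>v\<in>fst G. measure_pmf.prob \<pi> {X. v \<in> X} \<le> ef)"
    using frag efp unfolding frac_tw_fragile_def by blast
  show "\<exists>k. \<forall>(\<sigma>, \<A>)\<in>A_class \<G> r. \<exists>\<B>. is_struct \<sigma> \<B> \<and> treewidth (gaifman \<B>) \<le> k \<and> d_opt \<sigma> \<A> \<B> \<le> ereal \<epsilon>"
  proof (intro exI[of _ k] ballI)
    fix x assume x: "x \<in> A_class \<G> r"
    obtain \<sigma> A where xs: "x = (\<sigma>, A)" by (cases x)
    have A: "is_struct \<sigma> A" and ar: "\<forall>f\<in>fst \<sigma>. snd \<sigma> f \<le> r"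
      using x unfolding xs A_class_def by auto
    obtain G where G: "G \<in> \<G>" "graph_iso (gaifman A) G" using x unfolding xs A_class_def by auto
    obtain \<phi> where phi: "bij_betw \<phi> (fst A) (fst G)"
      and iso: "\<forall>u\<in>fst A. \<forall>v\<in>fst A. (u, v) \<in> snd (gaifman A) \<longleftrightarrow> (\<phi> u, \<phi> v) \<in> snd G"
      using G(2) unfolding graph_iso_def by (auto simp: gaifman_def)
    obtain \<pi> :: "nat set pmf" where pi: "set_pmf \<pi> \<subseteq> {X. X \<subseteq> fst G \<and> treewidth (del_verts G X) \<le> k}"
      "\<forall>v\<in>fst G. measure_pmf.prob \<pi> {X. v \<in> X} \<le> ef" using k G(1) by blast
    have "\<exists>B. is_struct \<sigma> B \<and> treewidth (gaifman B) \<le> k \<and> d_opt \<sigma> A B \<le> ereal (- ln (1 - \<rho>))"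
      using forward_one[OF A ar graphs[rule_format, OF G(1)] phi iso pi rho _ efr] efp by simp
    then show "case x of (\<sigma>, \<A>) \<Rightarrow> \<exists>\<B>. is_struct \<sigma> \<B> \<and> treewidth (gaifman \<B>) \<le> k \<and> d_opt \<sigma> \<A> \<B> \<le> ereal \<epsilon>"
      unfolding xs lnr by simp
  qed
qed

definition supp_ind :: "vstruct \<Rightarrow> vstruct" where
  "supp_ind A = (fst A, \<lambda>f ys. if snd A f ys > 0 then 1 else 0)"

definition hcons :: "vstruct \<Rightarrow> vstruct \<Rightarrow> (nat \<Rightarrow> nat) \<Rightarrow> vstruct" where
  "hcons A B h = (fst B, \<lambda>f ys. if snd B f ys > 0 \<and> snd A f (map h ys) > 0 then 1 else 0)"

definition smass :: "signature \<Rightarrow> vstruct \<Rightarrow> real" where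
  "smass \<sigma> A = (\<Sum>f\<in>fst \<sigma>. \<Sum>xs\<in>tuples (fst A) (snd \<sigma> f). snd A f xs)"

lemma supp_ind_struct:
  assumes "is_struct \<sigma> A" shows "is_struct \<sigma> (supp_ind A)"
  using assms unfolding is_struct_def supp_ind_def
  by (auto simp: less_le) 

lemma hcons_struct:
  assumes "is_struct \<sigma> B" shows "is_struct \<sigma> (hcons A B h)"
  using assms unfolding is_struct_def hcons_def
  by (auto simp: less_le)

lemma core_pres:
  assumes A: "is_struct \<sigma> A" and B: "is_struct \<sigma> B" and d: "d_opt \<sigma> A B \<le> ereal \<epsilon>"
    and S: "smass \<sigma> A > 0"
  shows "\<exists>g h. (\<forall>x\<in>fst A. g x \<in> fst B) \<and> (\<forall>y\<in>fst B. h y \<in> fst A) \<and>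
     (\<Sum>f\<in>fst \<sigma>. \<Sum>xs\<in>tuples (fst A) (snd \<sigma> f).
        snd A f xs * (if snd B f (map g xs) > 0 \<and> snd A f (map h (map g xs)) > 0 then 1 else 0))
     \<ge> exp (- 2 * \<epsilon>) * smass \<sigma> A"
proof -
  have fin: "finite (fst A)" "fst A \<noteq> {}" "finite (fst B)" "fst B \<noteq> {}"
    using A B unfolding is_struct_def by auto
  have Apos: "\<And>f xs. 0 \<le> snd A f xs" and Bpos: "\<And>f xs. 0 \<le> snd B f xs"
    using A B unfolding is_struct_def by auto
  let ?Cs = "supp_ind A"
  have Cs: "is_struct \<sigma> ?Cs" by (rule supp_ind_struct[OF A])
  have "sval \<sigma> A ?Cs id = smass \<sigma> A"
    unfolding sval_def smass_def supp_ind_def using Apos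
    by (intro sum.cong refl) (auto simp: less_le)
  moreover have "sval \<sigma> A ?Cs id \<le> sopt \<sigma> A ?Cs"
    by (rule sopt_ge) (use fin in \<open>auto simp: supp_ind_def\<close>)
  ultimately have oA: "sopt \<sigma> A ?Cs \<ge> smass \<sigma> A" by simp
  have oB: "sopt \<sigma> B ?Cs \<ge> exp (- \<epsilon>) * sopt \<sigma> A ?Cs"
    using dopt_bounds(1)[OF A B d Cs] oA S by simp
  obtain h where h: "\<forall>y\<in>fst B. h y \<in> fst A" "sopt \<sigma> B ?Cs = sval \<sigma> B ?Cs h"
  proof -
    have "finite (fst ?Cs)" "fst ?Cs \<noteq> {}" using fin by (auto simp: supp_ind_def)
    then show ?thesis using sopt_attained[OF fin(3), of ?Cs \<sigma>] that by (auto simp: supp_ind_def)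
  qed
  let ?Ch = "hcons A B h"
  have Ch: "is_struct \<sigma> ?Ch" by (rule hcons_struct[OF B])
  have "sval \<sigma> B ?Ch id = sval \<sigma> B ?Cs h"
    unfolding sval_def hcons_def supp_ind_def using Bpos
    by (intro sum.cong refl) (auto simp: less_le)
  moreover have "sval \<sigma> B ?Ch id \<le> sopt \<sigma> B ?Ch"
    by (rule sopt_ge) (use fin in \<open>auto simp: hcons_def\<close>)
  ultimately have oBh: "sopt \<sigma> B ?Ch \<ge> exp (- \<epsilon>) * smass \<sigma> A"
    using h(2) oB oA by (smt (verit) exp_gt_zero mult_left_mono)
  then have "sopt \<sigma> B ?Ch > 0" using S by (smt (verit) exp_gt_zero mult_pos_pos)
  then have oAh: "sopt \<sigma> A ?Ch \<ge> exp (- \<epsilon>) * sopt \<sigma> B ?Ch"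
    using dopt_bounds(2)[OF A B d Ch] by simp
  obtain g where g: "\<forall>x\<in>fst A. g x \<in> fst B" "sopt \<sigma> A ?Ch = sval \<sigma> A ?Ch g"
  proof -
    have "finite (fst ?Ch)" "fst ?Ch \<noteq> {}" using fin by (auto simp: hcons_def)
    then show ?thesis using sopt_attained[OF fin(1), of ?Ch \<sigma>] that by (auto simp: hcons_def)
  qed
  have "exp (- 2 * \<epsilon>) * smass \<sigma> A = exp (- \<epsilon>) * (exp (- \<epsilon>) * smass \<sigma> A)"
    by (simp add: exp_add[symmetric])
  also have "\<dots> \<le> exp (- \<epsilon>) * sopt \<sigma> B ?Ch" using oBh by (simp add: mult_left_mono)
  also have "\<dots> \<le> sval \<sigma> A ?Ch g" using oAh g(2) by simp
  also have "\<dots> = (\<Sum>f\<in>fst \<sigma>. \<Sum>xs\<in>tuples (fst A) (snd \<sigma> f).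
        snd A f xs * (if snd B f (map g xs) > 0 \<and> snd A f (map h (map g xs)) > 0 then 1 else 0))"
    unfolding sval_def hcons_def by simp
  finally show ?thesis using g(1) h(1) by blast
qed

definition symP :: "nat \<Rightarrow> nat" where "symP v = 2 * v"
definition symE :: "nat \<times> nat \<Rightarrow> nat" where "symE e = 2 * prod_encode e + 1"
definition sigG :: "graph \<Rightarrow> signature" where
  "sigG G = (symP ` fst G \<union> symE ` snd G, \<lambda>f. if even f then 1 else 2)"
definition mnw :: "(nat \<Rightarrow> real) \<Rightarrow> nat \<times> nat \<Rightarrow> real" where
  "mnw w e = min (w (fst e)) (w (snd e))"
definition AW :: "graph \<Rightarrow> (nat \<Rightarrow> real) \<Rightarrow> vstruct" where
  "AW G w = (fst G, \<lambda>f xs. if even f then (if f div 2 \<in> fst G \<and> xs = [f div 2] then w (f div 2) else 0)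
      else (if prod_decode (f div 2) \<in> snd G \<and> xs = [fst (prod_decode (f div 2)), snd (prod_decode (f div 2))]
            then mnw w (prod_decode (f div 2)) else 0))"

lemma symP_even[simp]: "even (symP v)" and symE_odd[simp]: "\<not> even (symE e)"
  unfolding symP_def symE_def by auto

lemma symP_inj[simp]: "symP u = symP v \<longleftrightarrow> u = v" and symE_inj[simp]: "symE a = symE b \<longleftrightarrow> a = b"
  unfolding symP_def symE_def by auto

lemma symPE_ne[simp]: "symP v \<noteq> symE e" "symE e \<noteq> symP v"
  unfolding symP_def symE_def by presburger+

lemma AW_P: "snd (AW G w) (symP v) xs = (if v \<in> fst G \<and> xs = [v] then w v else 0)"
  unfolding AW_def symP_def by simp

lemma AW_E: "snd (AW G w) (symE e) xs = (if e \<in> snd G \<and> xs = [fst e, snd e] then mnw w e else 0)"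
proof -
  have "symE e div 2 = prod_encode e" unfolding symE_def by simp
  then show ?thesis unfolding AW_def by simp
qed

lemma sigG_ar: "snd (sigG G) (symP v) = 1" "snd (sigG G) (symE e) = 2"
  unfolding sigG_def by auto

lemma sym_cases:
  assumes "f \<in> fst (sigG G)"
  obtains v where "v \<in> fst G" "f = symP v" | e where "e \<in> snd G" "f = symE e"
  using assms unfolding sigG_def by auto

lemma AW_zero_other:
  assumes "f \<notin> fst (sigG G)"
  shows "snd (AW G w) f xs = 0"
proof (cases "even f")
  case True
  then have "f = symP (f div 2)" unfolding symP_def by simp
  have "f div 2 \<notin> fst G"
  proof
    assume "f div 2 \<in> fst G"
    then have "symP (f div 2) \<in> fst (sigG G)" unfolding sigG_def by auto
    then show False using assms \<open>f = symP (f div 2)\<close> by simp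
  qed
  then show ?thesis using True unfolding AW_def by simp
next
  case False
  then have "f = symE (prod_decode (f div 2))" unfolding symE_def by simp
  have "prod_decode (f div 2) \<notin> snd G"
  proof
    assume "prod_decode (f div 2) \<in> snd G"
    then have "symE (prod_decode (f div 2)) \<in> fst (sigG G)" unfolding sigG_def by auto
    then show False using assms \<open>f = symE (prod_decode (f div 2))\<close> by simp
  qed
  then show ?thesis using False unfolding AW_def by simp
qed

lemma AW_struct:
  assumes G: "is_graph G" "fst G \<noteq> {}" and w: "\<forall>v\<in>fst G. w v \<in> \<rat> \<and> w v > 0"
  shows "is_struct (sigG G) (AW G w)"
proof -
  have GG: "snd G \<subseteq> fst G \<times> fst G" using G unfolding is_graph_def by auto
  have c1: "finite (fst (AW G w))" "fst (AW G w) \<noteq> {}" using G unfolding is_graph_def AW_def by auto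
  have mnwQ: "mnw w e \<in> \<rat> \<and> mnw w e > 0" if "e \<in> snd G" for e
    using w GG that unfolding mnw_def min_def by (cases e) auto
  have c2: "snd (AW G w) f xs \<in> \<rat> \<and> 0 \<le> snd (AW G w) f xs" for f xs
  proof (cases "f \<in> fst (sigG G)")
    case True
    then show ?thesis
    proof (cases rule: sym_cases)
      case (1 v) then show ?thesis using w by (auto simp: AW_P less_imp_le)
    next
      case (2 e) then show ?thesis using mnwQ by (auto simp: AW_E less_imp_le)
    qed
  next
    case False then show ?thesis by (simp add: AW_zero_other)
  qed
  have c3: "f \<in> fst (sigG G) \<and> xs \<in> tuples (fst (AW G w)) (snd (sigG G) f)"
    if ne: "snd (AW G w) f xs \<noteq> 0" for f xs
  proof -
  have fs: "f \<in> fst (sigG G)" using ne AW_zero_other by blast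
  have "xs \<in> tuples (fst (AW G w)) (snd (sigG G) f)" using fs
  proof (cases rule: sym_cases)
    case (1 v) then show ?thesis using ne by (auto simp: AW_P sigG_ar tuples_def AW_def split: if_splits)
  next
    case (2 e) then show ?thesis using ne GG by (cases e) (auto simp: AW_E sigG_ar tuples_def AW_def split: if_splits)
  qed
  then show ?thesis using fs by simp
  qed
  show ?thesis unfolding is_struct_def using c1 c2 c3 by blast
qed

lemma AW_sum:
  assumes G: "is_graph G"
  shows "(\<Sum>f\<in>fst (sigG G). \<Sum>xs\<in>tuples (fst G) (snd (sigG G) f). snd (AW G w) f xs * \<Phi> f xs)
     = (\<Sum>v\<in>fst G. w v * \<Phi> (symP v) [v]) + (\<Sum>e\<in>snd G. mnw w e * \<Phi> (symE e) [fst e, snd e])"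
proof -
  have fV: "finite (fst G)" and GG: "snd G \<subseteq> fst G \<times> fst G" using G unfolding is_graph_def by auto
  have fE: "finite (snd G)" using GG fV finite_subset by blast
  let ?F = "\<lambda>f. \<Sum>xs\<in>tuples (fst G) (snd (sigG G) f). snd (AW G w) f xs * \<Phi> f xs"
  have "(\<Sum>f\<in>fst (sigG G). ?F f) = (\<Sum>f\<in>symP ` fst G. ?F f) + (\<Sum>f\<in>symE ` snd G. ?F f)"
    unfolding sigG_def fst_conv using fV fE by (intro sum.union_disjoint) auto
  also have "(\<Sum>f\<in>symP ` fst G. ?F f) = (\<Sum>v\<in>fst G. ?F (symP v))"
    by (simp add: sum.reindex inj_on_def)
  also have "(\<Sum>f\<in>symE ` snd G. ?F f) = (\<Sum>e\<in>snd G. ?F (symE e))"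
    by (simp add: sum.reindex inj_on_def)
  also have "(\<Sum>v\<in>fst G. ?F (symP v)) = (\<Sum>v\<in>fst G. w v * \<Phi> (symP v) [v])"
  proof (intro sum.cong refl)
    fix v assume v: "v \<in> fst G"
    have "?F (symP v) = (\<Sum>xs\<in>tuples (fst G) 1. if xs = [v] then w v * \<Phi> (symP v) xs else 0)"
      using v by (intro sum.cong) (auto simp: AW_P sigG_ar)
    also have "\<dots> = w v * \<Phi> (symP v) [v]"
      using v tuples_finite[OF fV] by (simp add: sum.delta' tuples_def)
    finally show "?F (symP v) = w v * \<Phi> (symP v) [v]" .
  qed
  also have "(\<Sum>e\<in>snd G. ?F (symE e)) = (\<Sum>e\<in>snd G. mnw w e * \<Phi> (symE e) [fst e, snd e])"
  proof (intro sum.cong refl)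
    fix e assume e: "e \<in> snd G"
    have "?F (symE e) = (\<Sum>xs\<in>tuples (fst G) 2. if xs = [fst e, snd e] then mnw w e * \<Phi> (symE e) xs else 0)"
      using e by (intro sum.cong) (auto simp: AW_E sigG_ar)
    also have "\<dots> = mnw w e * \<Phi> (symE e) [fst e, snd e]"
      using e GG tuples_finite[OF fV] by (auto simp: sum.delta' tuples_def)
    finally show "?F (symE e) = mnw w e * \<Phi> (symE e) [fst e, snd e]" .
  qed
  finally show ?thesis .
qed

lemma AW_gaifman_edges:
  assumes G: "is_graph G" and w: "\<forall>v\<in>fst G. w v > 0"
  shows "snd (gaifman (AW G w)) = snd G"
proof -
  have GG: "snd G \<subseteq> fst G \<times> fst G" and sym: "\<And>u v. (u, v) \<in> snd G \<Longrightarrow> (v, u) \<in> snd G"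
    and irr: "\<And>u. (u, u) \<notin> snd G" using G unfolding is_graph_def by auto
  have mp: "mnw w e > 0" if "e \<in> snd G" for e using w GG that unfolding mnw_def by (cases e) auto
  have pos: "snd (AW G w) f xs > 0 \<longleftrightarrow> (\<exists>v\<in>fst G. f = symP v \<and> xs = [v]) \<or> (\<exists>e\<in>snd G. f = symE e \<and> xs = [fst e, snd e])"
    for f xs
  proof (cases "f \<in> fst (sigG G)")
    case True
    then show ?thesis
    proof (cases rule: sym_cases)
      case (1 v) then show ?thesis using w by (auto simp: AW_P)
    next
      case (2 e) then show ?thesis using mp by (auto simp: AW_E)
    qed
  next
    case False
    then show ?thesis by (auto simp: AW_zero_other sigG_def)
  qed
  show ?thesis
  proof (intro set_eqI iffI)
    fix x assume "x \<in> snd (gaifman (AW G w))"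
    then obtain u v f xs where x: "x = (u, v)" "u \<noteq> v" "snd (AW G w) f xs > 0" "u \<in> set xs" "v \<in> set xs"
      unfolding gaifman_def by auto
    then show "x \<in> snd G" using pos[of f xs] sym by (cases x) auto
  next
    fix x assume x: "x \<in> snd G"
    obtain u v where uv: "x = (u, v)" by (cases x)
    have "snd (AW G w) (symE (u, v)) [u, v] > 0" using pos x uv by auto
    moreover have "u \<noteq> v" using irr x uv by auto
    ultimately show "x \<in> snd (gaifman (AW G w))" unfolding gaifman_def uv
      by simp (intro exI[of _ "symE (u, v)"] exI[of _ "[u, v]"], auto)
  qed
qed

lemma AW_class:
  assumes G: "G \<in> \<G>" "is_graph G" "fst G \<noteq> {}" and w: "\<forall>v\<in>fst G. w v \<in> \<rat> \<and> w v > 0" and r: "r \<ge> 2"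
  shows "(sigG G, AW G w) \<in> A_class \<G> r"
proof -
  have "finite (fst G)" "snd G \<subseteq> fst G \<times> fst G" using G(2) unfolding is_graph_def by auto
  then have "finite (snd G)" using finite_subset by blast
  then have "is_sig (sigG G)" unfolding is_sig_def sigG_def using \<open>finite (fst G)\<close> by auto
  moreover have "is_struct (sigG G) (AW G w)" by (rule AW_struct[OF G(2,3) w])
  moreover have "graph_iso (gaifman (AW G w)) G"
    unfolding graph_iso_def using AW_gaifman_edges[OF G(2)] w
    by (intro exI[of _ id]) (auto simp: gaifman_def AW_def)
  moreover have "\<forall>f\<in>fst (sigG G). snd (sigG G) f \<le> r" using r unfolding sigG_def by auto
  ultimately show ?thesis using G(1) unfolding A_class_def by blast
qed

lemma sum_diff_le_ind:
  fixes c :: "nat \<Rightarrow> real" and Q :: "nat \<Rightarrow> bool"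
  assumes "finite S" "\<forall>x\<in>S. c x \<ge> 0" "\<forall>x\<in>S. ind x \<le> 1 \<and> ind x \<ge> 0" "\<forall>x\<in>S. \<not> Q x \<longrightarrow> ind x = 0"
  shows "(\<Sum>x\<in>{x\<in>S. \<not> Q x}. c x) \<le> (\<Sum>x\<in>S. c x * (1 - ind x))"
proof -
  have "(\<Sum>x\<in>{x\<in>S. \<not> Q x}. c x) = (\<Sum>x\<in>S. if \<not> Q x then c x else 0)"
    using assms(1) by (simp add: sum.inter_filter)
  also have "\<dots> \<le> (\<Sum>x\<in>S. c x * (1 - ind x))"
    using assms by (intro sum_mono) (auto simp: mult_nonneg_nonneg)
  finally show ?thesis .
qed

lemma sum_diff_le_ind2:
  fixes c :: "nat \<times> nat \<Rightarrow> real"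
  assumes "finite S" "\<forall>x\<in>S. c x \<ge> 0" "\<forall>x\<in>S. ind x \<le> 1 \<and> ind x \<ge> 0" "\<forall>x\<in>S. \<not> Q x \<longrightarrow> ind x = 0"
  shows "(\<Sum>x\<in>{x\<in>S. \<not> Q x}. c x) \<le> (\<Sum>x\<in>S. c x * (1 - ind x))"
proof -
  have "(\<Sum>x\<in>{x\<in>S. \<not> Q x}. c x) = (\<Sum>x\<in>S. if \<not> Q x then c x else 0)"
    using assms(1) by (simp add: sum.inter_filter)
  also have "\<dots> \<le> (\<Sum>x\<in>S. c x * (1 - ind x))"
    using assms by (intro sum_mono) (auto simp: mult_nonneg_nonneg)
  finally show ?thesis .
qed

lemma graph_core:
  assumes G: "is_graph G" "fst G \<noteq> {}" and w: "\<forall>v\<in>fst G. w v \<in> \<rat> \<and> w v > 0"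
    and B: "is_struct (sigG G) B" and d: "d_opt (sigG G) (AW G w) B \<le> ereal \<epsilon>"
  shows "\<exists>g Z Pe. (\<forall>v\<in>fst G. g v \<in> fst B) \<and> Z \<subseteq> fst G \<and> inj_on g Z \<and> Pe \<subseteq> snd G \<inter> (Z \<times> Z)
     \<and> (\<forall>a b. (a, b) \<in> Pe \<longrightarrow> (g a, g b) \<in> snd (gaifman B))
     \<and> (\<Sum>v\<in>fst G - Z. w v) + (\<Sum>e\<in>snd G - Pe. mnw w e)
        \<le> (1 - exp (- 2 * \<epsilon>)) * ((\<Sum>v\<in>fst G. w v) + (\<Sum>e\<in>snd G. mnw w e))"
proof -
  let ?A = "AW G w" and ?\<sigma> = "sigG G"
  have fV: "finite (fst G)" and GG: "snd G \<subseteq> fst G \<times> fst G" and irr: "\<And>u. (u, u) \<notin> snd G"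
    using G unfolding is_graph_def by auto
  have fE: "finite (snd G)" using GG fV finite_subset by blast
  have A: "is_struct ?\<sigma> ?A" by (rule AW_struct[OF G w])
  have fA: "fst ?A = fst G" unfolding AW_def by simp
  have mpos: "mnw w e > 0" if "e \<in> snd G" for e using w GG that unfolding mnw_def by (cases e) auto
  define W where "W = (\<Sum>v\<in>fst G. w v)"
  define M where "M = (\<Sum>e\<in>snd G. mnw w e)"
  have sm: "smass ?\<sigma> ?A = W + M"
    using AW_sum[OF G(1), of w "\<lambda>_ _. 1"] unfolding smass_def fA W_def M_def by simp
  have Wpos: "W > 0" unfolding W_def using G(2) fV w by (intro sum_pos) auto
  have Mnn: "M \<ge> 0" unfolding M_def using mpos by (intro sum_nonneg) (auto simp: less_imp_le)
  obtain g h where gh: "\<forall>x\<in>fst ?A. g x \<in> fst B" "\<forall>y\<in>fst B. h y \<in> fst ?A"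
    and pres: "(\<Sum>f\<in>fst ?\<sigma>. \<Sum>xs\<in>tuples (fst ?A) (snd ?\<sigma> f).
        snd ?A f xs * (if snd B f (map g xs) > 0 \<and> snd ?A f (map h (map g xs)) > 0 then 1 else 0))
     \<ge> exp (- 2 * \<epsilon>) * smass ?\<sigma> ?A"
    using core_pres[OF A B d] sm Wpos Mnn by fastforce
  define ind where "ind = (\<lambda>f xs. if snd B f (map g xs) > 0 \<and> snd ?A f (map h (map g xs)) > 0 then 1 else (0::real))"
  define iv where "iv = (\<lambda>v. ind (symP v) [v])"
  define ie where "ie = (\<lambda>e. ind (symE e) [fst e, snd e])"
  have pres2: "(\<Sum>v\<in>fst G. w v * iv v) + (\<Sum>e\<in>snd G. mnw w e * ie e) \<ge> exp (- 2 * \<epsilon>) * (W + M)"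
    using pres AW_sum[OF G(1), of w ind] sm unfolding fA iv_def ie_def ind_def by simp
  define Z where "Z = {v\<in>fst G. h (g v) = v}"
  define Pe where "Pe = {e\<in>snd G. ie e = 1}"
  have iv01: "iv v \<le> 1 \<and> iv v \<ge> 0" for v unfolding iv_def ind_def by auto
  have ie01: "ie e \<le> 1 \<and> ie e \<ge> 0" for e unfolding ie_def ind_def by auto
  have ivZ: "iv v = 0" if "v \<in> fst G" "v \<notin> Z" for v
    using that unfolding iv_def ind_def Z_def by (auto simp: AW_P split: if_splits)
  have ieP: "ie e = 0" if "e \<in> snd G" "e \<notin> Pe" for e
    using that ie01[of e] unfolding Pe_def ie_def ind_def by (auto split: if_splits)
  have Pe_prop: "h (g a) = a \<and> h (g b) = b \<and> snd B (symE (a, b)) [g a, g b] > 0" if "(a, b) \<in> Pe" for a b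
    using that unfolding Pe_def ie_def ind_def by (auto simp: AW_E split: if_splits)
  have PeZ: "Pe \<subseteq> snd G \<inter> (Z \<times> Z)"
  proof
    fix e assume e: "e \<in> Pe"
    obtain a b where ab: "e = (a, b)" by (cases e)
    have "e \<in> snd G" using e unfolding Pe_def by simp
    then show "e \<in> snd G \<inter> (Z \<times> Z)" using Pe_prop[of a b] e ab GG unfolding Z_def by auto
  qed
  have injZ: "inj_on g Z" unfolding Z_def by (rule inj_on_inverseI[of _ h]) auto
  have Pe_edge: "(g a, g b) \<in> snd (gaifman B)" if "(a, b) \<in> Pe" for a b
  proof -
    have ab: "(a, b) \<in> snd G" using that unfolding Pe_def by simp
    have "a \<noteq> b" using irr ab by auto
    then have "g a \<noteq> g b" using Pe_prop[OF that] by metis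
    then show ?thesis using Pe_prop[OF that] unfolding gaifman_def
      by simp (intro exI[of _ "symE (a, b)"] exI[of _ "[g a, g b]"], auto)
  qed
  have fail1: "(\<Sum>v\<in>fst G - Z. w v) \<le> (\<Sum>v\<in>fst G. w v * (1 - iv v))"
  proof -
    have "fst G - Z = {v\<in>fst G. \<not> (v \<in> Z)}" by auto
    then show ?thesis using sum_diff_le_ind[OF fV, of w iv "\<lambda>v. v \<in> Z"] w iv01 ivZ by (auto simp: less_imp_le)
  qed
  have fail2: "(\<Sum>e\<in>snd G - Pe. mnw w e) \<le> (\<Sum>e\<in>snd G. mnw w e * (1 - ie e))"
  proof -
    have "snd G - Pe = {e\<in>snd G. \<not> (e \<in> Pe)}" by auto
    then show ?thesis using sum_diff_le_ind2[OF fE, of "mnw w" ie "\<lambda>e. e \<in> Pe"] mpos ie01 ieP by (auto simp: less_imp_le)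
  qed
  have "(\<Sum>v\<in>fst G. w v * (1 - iv v)) + (\<Sum>e\<in>snd G. mnw w e * (1 - ie e))
       = W + M - ((\<Sum>v\<in>fst G. w v * iv v) + (\<Sum>e\<in>snd G. mnw w e * ie e))"
    unfolding W_def M_def by (simp add: algebra_simps sum_subtractf)
  also have "\<dots> \<le> (1 - exp (- 2 * \<epsilon>)) * (W + M)" using pres2 by (simp add: algebra_simps)
  finally have "(\<Sum>v\<in>fst G - Z. w v) + (\<Sum>e\<in>snd G - Pe. mnw w e) \<le> (1 - exp (- 2 * \<epsilon>)) * (W + M)"
    using fail1 fail2 by linarith
  moreover have "Z \<subseteq> fst G" unfolding Z_def by auto
  moreover have "\<forall>v\<in>fst G. g v \<in> fst B" using gh fA by simp
  ultimately show ?thesis unfolding W_def M_def using injZ PeZ Pe_edge by blast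
qed

lemma avoid_leaf:
  assumes "(a, b) \<in> Q\<^sup>*" "a \<noteq> t" "b \<noteq> t" "s \<noteq> t"
    and out: "\<And>y. (t, y) \<in> Q \<Longrightarrow> y = s" and inn: "\<And>y. (y, t) \<in> Q \<Longrightarrow> y = s"
  shows "(a, b) \<in> (Q - {(t, s), (s, t)})\<^sup>*"
proof -
  let ?Q = "Q - {(t, s), (s, t)}"
  have "(b \<noteq> t \<longrightarrow> (a, b) \<in> ?Q\<^sup>*) \<and> (b = t \<longrightarrow> (a, s) \<in> ?Q\<^sup>*)"
    using assms(1)
  proof (induction rule: rtrancl_induct)
    case base then show ?case using assms(2) by simp
  next
    case (step y z)
    show ?case
    proof (cases "z = t")
      case True
      then have "y = s" using inn step(2) by simp
      then show ?thesis using step(3) assms(4) True by simp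
    next
      case False
      show ?thesis
      proof (cases "y = t")
        case True
        then have "z = s" using out step(2) by simp
        then show ?thesis using step(3) True False by simp
      next
        case yt: False
        have "(y, z) \<in> ?Q" using step(2) yt False by auto
        then show ?thesis using step(3) yt False by (meson rtrancl.rtrancl_into_rtrancl)
      qed
    qed
  qed
  then show ?thesis using assms(3) by simp
qed

lemma tree_deg_pos:
  assumes "is_tree N F" "u \<in> N" "card N \<ge> 2"
  shows "\<exists>y. (u, y) \<in> F"
proof -
  have fN: "finite N" using assms(1) unfolding is_tree_def by simp
  obtain v where v: "v \<in> N" "v \<noteq> u"
  proof -
    have "\<not> N \<subseteq> {u}"
    proof
      assume "N \<subseteq> {u}"
      then have "card N \<le> card {u}" by (intro card_mono) auto
      then show False using assms(3) by simp
    qed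
    then show ?thesis using that by blast
  qed
  have "(u, v) \<in> F\<^sup>*" using assms(1,2) v unfolding is_tree_def by blast
  then show ?thesis using v(2) by (cases rule: converse_rtranclE) auto
qed

lemma tree_leaf:
  assumes T: "is_tree N F" and c: "card N \<ge> 2"
  shows "\<exists>t s. t \<in> N \<and> s \<in> N \<and> {y. (t, y) \<in> F} = {s}"
proof -
  have fN: "finite N" and FN: "F \<subseteq> N \<times> N" and cF: "card F = 2 * (card N - 1)"
    using T unfolding is_tree_def by auto
  have Fsig: "F = Sigma N (\<lambda>u. {y. (u, y) \<in> F})" using FN by auto
  have fin: "finite {y. (u, y) \<in> F}" for u
  proof -
    have "{y. (u, y) \<in> F} \<subseteq> N" using FN by auto
    then show ?thesis using fN finite_subset by blast
  qed
  have cs: "card F = (\<Sum>u\<in>N. card {y. (u, y) \<in> F})"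
    by (subst Fsig) (simp add: card_SigmaI fN fin)
  have "\<exists>u\<in>N. card {y. (u, y) \<in> F} < 2"
  proof (rule ccontr)
    assume "\<not> ?thesis"
    then have "(\<Sum>u\<in>N. card {y. (u, y) \<in> F}) \<ge> (\<Sum>u\<in>N. 2)" by (intro sum_mono) auto
    then have "card F \<ge> 2 * card N" using cs by simp
    then show False using cF c by simp
  qed
  then obtain t where t: "t \<in> N" "card {y. (t, y) \<in> F} < 2" by blast
  obtain y where y: "(t, y) \<in> F" using tree_deg_pos[OF T t(1) c] by blast
  have "card {y. (t, y) \<in> F} \<noteq> 0" using y fin[of t] by auto
  then have "card {y. (t, y) \<in> F} = 1" using t(2) by simp
  then obtain s where s: "{y. (t, y) \<in> F} = {s}" by (rule card_1_singletonE)
  then have "s \<in> N" using FN by auto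
  then show ?thesis using t(1) s by blast
qed

lemma leaf_remove:
  assumes TD: "tree_decomp H N F \<beta>" and wf: "wf_graph H"
    and t: "t \<in> N" and s: "s \<in> N" and nb: "{y. (t, y) \<in> F} = {s}"
  shows "\<forall>x\<in>\<beta> t - \<beta> s. \<forall>t'\<in>N. x \<in> \<beta> t' \<longrightarrow> t' = t"
    and "\<forall>x\<in>\<beta> t - \<beta> s. \<forall>y. (x, y) \<in> snd H \<or> (y, x) \<in> snd H \<longrightarrow> y \<in> \<beta> t"
    and "tree_decomp (induced H (fst H - (\<beta> t - \<beta> s))) (N - {t}) (F - {(t, s), (s, t)}) \<beta>"
proof -
  let ?R = "\<beta> t - \<beta> s"
  let ?F' = "F - {(t, s), (s, t)}"
  let ?N' = "N - {t}"
  note td = TD[unfolded tree_decomp_def]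
  have T: "is_tree N F" using td by simp
  have fN: "finite N" and FN: "F \<subseteq> N \<times> N" and sym: "\<And>a b. (a, b) \<in> F \<Longrightarrow> (b, a) \<in> F"
    and irr: "\<And>a. (a, a) \<notin> F" and conn: "\<And>a b. a \<in> N \<Longrightarrow> b \<in> N \<Longrightarrow> (a, b) \<in> F\<^sup>*"
    and cF: "card F = 2 * (card N - 1)"
    using T unfolding is_tree_def by auto
  have bags: "\<And>u. u \<in> N \<Longrightarrow> \<beta> u \<subseteq> fst H" using td by auto
  have cover: "\<And>v. v \<in> fst H \<Longrightarrow> \<exists>u\<in>N. v \<in> \<beta> u" using td by auto
  have edge: "\<And>u v. (u, v) \<in> snd H \<Longrightarrow> \<exists>t'\<in>N. u \<in> \<beta> t' \<and> v \<in> \<beta> t'" using td by auto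
  have sub: "\<And>v a b. v \<in> fst H \<Longrightarrow> a \<in> N \<Longrightarrow> b \<in> N \<Longrightarrow> v \<in> \<beta> a \<Longrightarrow> v \<in> \<beta> b
      \<Longrightarrow> (a, b) \<in> (F \<inter> {x. v \<in> \<beta> x} \<times> {x. v \<in> \<beta> x})\<^sup>*" using td by auto
  have ts: "(t, s) \<in> F" using nb by auto
  have st: "s \<noteq> t" using ts irr by auto
  have out: "\<And>y. (t, y) \<in> F \<Longrightarrow> y = s" using nb by auto
  have inn: "\<And>y. (y, t) \<in> F \<Longrightarrow> y = s" using out sym by blast
  show A: "\<forall>x\<in>?R. \<forall>t'\<in>N. x \<in> \<beta> t' \<longrightarrow> t' = t"
  proof (intro ballI impI)
    fix x t' assume x: "x \<in> ?R" and t': "t' \<in> N" "x \<in> \<beta> t'"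
    have xH: "x \<in> fst H" using x bags t by auto
    have "(t, t') \<in> (F \<inter> {u. x \<in> \<beta> u} \<times> {u. x \<in> \<beta> u})\<^sup>*" using sub[OF xH t t'(1)] x t' by auto
    then show "t' = t"
    proof (cases rule: converse_rtranclE)
      case base then show ?thesis by simp
    next
      case (step y)
      then have "y = s" "x \<in> \<beta> y" using out by auto
      then show ?thesis using x by simp
    qed
  qed
  show B: "\<forall>x\<in>?R. \<forall>y. (x, y) \<in> snd H \<or> (y, x) \<in> snd H \<longrightarrow> y \<in> \<beta> t"
  proof (intro ballI allI impI)
    fix x y assume x: "x \<in> ?R" and e: "(x, y) \<in> snd H \<or> (y, x) \<in> snd H"
    then obtain t' where "t' \<in> N" "x \<in> \<beta> t'" "y \<in> \<beta> t'" using edge by blast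
    then show "y \<in> \<beta> t" using A x by blast
  qed
  have F'N: "?F' \<subseteq> ?N' \<times> ?N'"
  proof
    fix p assume p: "p \<in> ?F'"
    obtain a b where ab: "p = (a, b)" by (cases p)
    have "(a, b) \<in> F" using p ab by simp
    moreover have "a \<noteq> t"
    proof
      assume "a = t" then have "b = s" using out \<open>(a, b) \<in> F\<close> by simp
      then show False using p ab \<open>a = t\<close> by simp
    qed
    moreover have "b \<noteq> t"
    proof
      assume "b = t" then have "a = s" using inn \<open>(a, b) \<in> F\<close> by simp
      then show False using p ab \<open>b = t\<close> by simp
    qed
    ultimately show "p \<in> ?N' \<times> ?N'" using FN ab by auto
  qed
  have cardN': "card ?N' = card N - 1" using t fN by simp
  have cardF': "card ?F' = card F - 2"
  proof -
    have "{(t, s), (s, t)} \<subseteq> F" using ts sym by auto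
    moreover have "card {(t, s), (s, t)} = 2" using st by simp
    ultimately show ?thesis by (simp add: card_Diff_subset)
  qed
  have cN2: "card N \<ge> 2"
  proof -
    have "{s, t} \<subseteq> N" using s t by auto
    then have "card {s, t} \<le> card N" using fN by (intro card_mono) auto
    then show ?thesis using st by simp
  qed
  have istree: "is_tree ?N' ?F'"
    unfolding is_tree_def
  proof (intro conjI allI impI ballI)
    show "finite ?N'" using fN by simp
    show "?N' \<noteq> {}" using s st by auto
    show "?F' \<subseteq> ?N' \<times> ?N'" by (rule F'N)
    show "(b, a) \<in> ?F'" if "(a, b) \<in> ?F'" for a b using that sym by auto
    show "(a, a) \<notin> ?F'" for a using irr by auto
    show "(a, b) \<in> ?F'\<^sup>*" if "a \<in> ?N'" "b \<in> ?N'" for a b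
      using avoid_leaf[of a b F t s] conn that st out inn by auto
    show "card ?F' = 2 * (card ?N' - 1)" using cardF' cardN' cF cN2 by simp
  qed
  show "tree_decomp (induced H (fst H - ?R)) ?N' ?F' \<beta>"
    unfolding tree_decomp_def induced_def fst_conv snd_conv
  proof (intro conjI allI impI ballI)
    show "is_tree ?N' ?F'" by (rule istree)
    show "\<beta> u \<subseteq> fst H - ?R" if "u \<in> ?N'" for u
      using that bags A by blast
    show "\<exists>u\<in>?N'. v \<in> \<beta> u" if vR: "v \<in> fst H - ?R" for v
    proof -
      obtain u where u: "u \<in> N" "v \<in> \<beta> u" using cover vR by auto
      show ?thesis
      proof (cases "u = t")
        case True then show ?thesis using u vR s st by (intro bexI[of _ s]) auto
      next
        case False then show ?thesis using u by blast
      qed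
    qed
    show "\<exists>u\<in>?N'. a \<in> \<beta> u \<and> b \<in> \<beta> u" if ab: "(a, b) \<in> snd H \<inter> (fst H - ?R) \<times> (fst H - ?R)" for a b
    proof -
      obtain u where u: "u \<in> N" "a \<in> \<beta> u" "b \<in> \<beta> u" using edge ab by blast
      show ?thesis
      proof (cases "u = t")
        case True then show ?thesis using u ab s st by (intro bexI[of _ s]) auto
      next
        case False then show ?thesis using u by blast
      qed
    qed
    show "(a, b) \<in> (?F' \<inter> {x. v \<in> \<beta> x} \<times> {x. v \<in> \<beta> x})\<^sup>*"
      if v: "v \<in> fst H - ?R" and ab: "a \<in> ?N'" "b \<in> ?N'" "v \<in> \<beta> a" "v \<in> \<beta> b" for v a b
    proof -
      let ?Q = "F \<inter> {x. v \<in> \<beta> x} \<times> {x. v \<in> \<beta> x}"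
      have "(a, b) \<in> ?Q\<^sup>*" using sub v ab by auto
      then have "(a, b) \<in> (?Q - {(t, s), (s, t)})\<^sup>*"
        using ab st out inn by (intro avoid_leaf) auto
      moreover have "?Q - {(t, s), (s, t)} \<subseteq> ?F' \<inter> {x. v \<in> \<beta> x} \<times> {x. v \<in> \<beta> x}" by auto
      ultimately show ?thesis using rtrancl_mono by blast
    qed
  qed
qed

lemma count_R:
  fixes w :: "nat \<Rightarrow> real"
  assumes wf: "wf_graph H" and irr: "\<forall>u. (u, u) \<notin> snd H" and R: "R \<subseteq> Bg" and fB: "finite Bg"
    and cB: "card Bg \<le> k + 1"
    and nb: "\<forall>x\<in>R. \<forall>y. (x, y) \<in> snd H \<or> (y, x) \<in> snd H \<longrightarrow> y \<in> Bg"
    and w: "\<forall>x\<in>R. w x \<ge> 0"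
  shows "(\<Sum>e\<in>{e\<in>snd H. fst e \<in> R \<or> snd e \<in> R}. mnw w e) \<le> 2 * real k * (\<Sum>x\<in>R. w x)"
proof -
  have fE: "finite (snd H)" using wf unfolding wf_graph_def by (meson finite_SigmaI finite_subset)
  have fR: "finite R" using R fB finite_subset by blast
  define Sg where "Sg = Sigma R (\<lambda>x. Bg - {x})"
  have fSg: "finite Sg" unfolding Sg_def using fR fB by auto
  define E1 where "E1 = {e\<in>snd H. fst e \<in> R}"
  define E2 where "E2 = {e\<in>snd H. fst e \<notin> R \<and> snd e \<in> R}"
  have split: "{e\<in>snd H. fst e \<in> R \<or> snd e \<in> R} = E1 \<union> E2" "E1 \<inter> E2 = {}"
    unfolding E1_def E2_def by auto
  have fE12: "finite E1" "finite E2" unfolding E1_def E2_def using fE by auto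
  have E1S: "E1 \<subseteq> Sg"
  proof
    fix e assume e: "e \<in> E1"
    obtain x y where xy: "e = (x, y)" by (cases e)
    have "(x, y) \<in> snd H" "x \<in> R" using e xy unfolding E1_def by auto
    then have "y \<in> Bg" "y \<noteq> x" using nb irr by auto
    then show "e \<in> Sg" using xy \<open>x \<in> R\<close> unfolding Sg_def by auto
  qed
  have E2S: "E2 \<subseteq> prod.swap ` Sg"
  proof
    fix e assume e: "e \<in> E2"
    obtain y x where xy: "e = (y, x)" by (cases e)
    have "(y, x) \<in> snd H" "x \<in> R" using e xy unfolding E2_def by auto
    then have "y \<in> Bg" "y \<noteq> x" using nb irr by auto
    then have "(x, y) \<in> Sg" using \<open>x \<in> R\<close> unfolding Sg_def by auto
    then show "e \<in> prod.swap ` Sg" using xy by force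
  qed
  have wS: "\<forall>p\<in>Sg. w (fst p) \<ge> 0" using w unfolding Sg_def by auto
  have sSg: "(\<Sum>p\<in>Sg. w (fst p)) \<le> real k * (\<Sum>x\<in>R. w x)"
  proof -
    have "(\<Sum>p\<in>Sg. w (fst p)) = (\<Sum>x\<in>R. \<Sum>y\<in>Bg - {x}. w x)"
      unfolding Sg_def using fR fB by (subst sum.Sigma) (auto simp: case_prod_beta intro!: sum.cong)
    also have "\<dots> = (\<Sum>x\<in>R. real (card (Bg - {x})) * w x)" by simp
    also have "\<dots> \<le> (\<Sum>x\<in>R. real k * w x)"
    proof (intro sum_mono mult_right_mono)
      fix x assume x: "x \<in> R"
      then have "card (Bg - {x}) = card Bg - 1" using R fB by (simp add: subsetD)
      then show "real (card (Bg - {x})) \<le> real k" using cB by simp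
      show "0 \<le> w x" using w x by simp
    qed
    also have "\<dots> = real k * (\<Sum>x\<in>R. w x)" by (simp add: sum_distrib_left)
    finally show ?thesis .
  qed
  have "(\<Sum>e\<in>{e\<in>snd H. fst e \<in> R \<or> snd e \<in> R}. mnw w e) = (\<Sum>e\<in>E1. mnw w e) + (\<Sum>e\<in>E2. mnw w e)"
    unfolding split(1) using fE12 split(2) by (simp add: sum.union_disjoint)
  also have "(\<Sum>e\<in>E1. mnw w e) \<le> (\<Sum>e\<in>E1. w (fst e))" unfolding mnw_def by (intro sum_mono) auto
  also have "\<dots> \<le> (\<Sum>p\<in>Sg. w (fst p))" using E1S fSg wS by (intro sum_mono2) auto
  also have "(\<Sum>e\<in>E2. mnw w e) \<le> (\<Sum>e\<in>E2. w (snd e))" unfolding mnw_def by (intro sum_mono) auto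
  also have "\<dots> \<le> (\<Sum>e\<in>prod.swap ` Sg. w (snd e))" using E2S fSg wS by (intro sum_mono2) auto
  also have "\<dots> = (\<Sum>p\<in>Sg. w (fst p))" by (subst sum.reindex) (auto simp: inj_on_def)
  finally show ?thesis using sSg by linarith
qed

lemma sparse:
  fixes w :: "nat \<Rightarrow> real"
  assumes "tree_decomp H N F \<beta>" "wf_graph H" "\<forall>u. (u, u) \<notin> snd H" "\<forall>t\<in>N. card (\<beta> t) \<le> k + 1"
    "\<forall>v\<in>fst H. w v \<ge> 0"
  shows "(\<Sum>e\<in>snd H. mnw w e) \<le> 2 * real k * (\<Sum>v\<in>fst H. w v)"
  using assms
proof (induction "card N" arbitrary: H N F \<beta> rule: less_induct)
  case less
  note TD = less.prems(1)
  have T: "is_tree N F" using TD unfolding tree_decomp_def by simp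
  have fN: "finite N" "N \<noteq> {}" using T unfolding is_tree_def by auto
  have fV: "finite (fst H)" and EV: "snd H \<subseteq> fst H \<times> fst H" using less.prems(2) unfolding wf_graph_def by auto
  have bags: "\<And>u. u \<in> N \<Longrightarrow> \<beta> u \<subseteq> fst H" and cover: "\<And>v. v \<in> fst H \<Longrightarrow> \<exists>u\<in>N. v \<in> \<beta> u"
    using TD unfolding tree_decomp_def by auto
  have allE: "{e\<in>snd H. fst e \<in> R \<or> snd e \<in> R} = snd H" if "fst H \<subseteq> R" for R
    using EV that by auto
  show ?case
  proof (cases "card N \<ge> 2")
    case False
    moreover have "card N > 0" using fN by (simp add: card_gt_0_iff)
    ultimately have "card N = 1" by simp
    then obtain t0 where N: "N = {t0}" by (rule card_1_singletonE)
    have Vb: "fst H \<subseteq> \<beta> t0" using cover N by auto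
    have fb: "finite (\<beta> t0)" using bags N fV finite_subset by auto
    have "(\<Sum>e\<in>{e\<in>snd H. fst e \<in> fst H \<or> snd e \<in> fst H}. mnw w e) \<le> 2 * real k * (\<Sum>x\<in>fst H. w x)"
    proof (rule count_R[OF less.prems(2,3) Vb fb])
      show "card (\<beta> t0) \<le> k + 1" using less.prems(4) N by simp
      show "\<forall>x\<in>fst H. \<forall>y. (x, y) \<in> snd H \<or> (y, x) \<in> snd H \<longrightarrow> y \<in> \<beta> t0" using EV Vb by auto
      show "\<forall>x\<in>fst H. 0 \<le> w x" using less.prems(5) by simp
    qed
    then show ?thesis using allE[of "fst H"] by simp
  next
    case True
    obtain t s where ts: "t \<in> N" "s \<in> N" "{y. (t, y) \<in> F} = {s}" using tree_leaf[OF T True] by blast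
    define R where "R = \<beta> t - \<beta> s"
    note LR = leaf_remove[OF TD less.prems(2) ts, folded R_def]
    define H' where "H' = induced H (fst H - R)"
    have RV: "R \<subseteq> fst H" using bags ts(1) unfolding R_def by auto
    have fb: "finite (\<beta> t)" using finite_subset[OF bags[OF ts(1)] fV] .
    have IH: "(\<Sum>e\<in>snd H'. mnw w e) \<le> 2 * real k * (\<Sum>v\<in>fst H'. w v)"
    proof (rule less.hyps[of "N - {t}"])
      show "card (N - {t}) < card N" using ts(1) fN by (simp add: card_gt_0_iff)
      show "tree_decomp H' (N - {t}) (F - {(t, s), (s, t)}) \<beta>" unfolding H'_def by (rule LR(3))
      show "wf_graph H'" unfolding H'_def using wf_induced[OF less.prems(2)] by auto
      show "\<forall>u. (u, u) \<notin> snd H'" using less.prems(3) unfolding H'_def induced_def by auto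
      show "\<forall>u\<in>N - {t}. card (\<beta> u) \<le> k + 1" using less.prems(4) by auto
      show "\<forall>v\<in>fst H'. 0 \<le> w v" using less.prems(5) unfolding H'_def induced_def by auto
    qed
    have cR: "(\<Sum>e\<in>{e\<in>snd H. fst e \<in> R \<or> snd e \<in> R}. mnw w e) \<le> 2 * real k * (\<Sum>x\<in>R. w x)"
    proof (rule count_R[OF less.prems(2,3) _ fb])
      show "R \<subseteq> \<beta> t" unfolding R_def by auto
      show "card (\<beta> t) \<le> k + 1" using less.prems(4) ts(1) by simp
      show "\<forall>x\<in>R. \<forall>y. (x, y) \<in> snd H \<or> (y, x) \<in> snd H \<longrightarrow> y \<in> \<beta> t" using LR(2) by blast
      show "\<forall>x\<in>R. 0 \<le> w x" using less.prems(5) RV by auto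
    qed
    have fE: "finite (snd H)" using EV fV by (meson finite_SigmaI finite_subset)
    have Esplit: "snd H = snd H' \<union> {e\<in>snd H. fst e \<in> R \<or> snd e \<in> R}"
      "snd H' \<inter> {e\<in>snd H. fst e \<in> R \<or> snd e \<in> R} = {}"
      unfolding H'_def induced_def using EV by auto
    have "(\<Sum>e\<in>snd H. mnw w e) = (\<Sum>e\<in>snd H'. mnw w e) + (\<Sum>e\<in>{e\<in>snd H. fst e \<in> R \<or> snd e \<in> R}. mnw w e)"
      using fE Esplit by (subst Esplit(1)) (rule sum.union_disjoint, auto simp: H'_def induced_def)
    also have "\<dots> \<le> 2 * real k * (\<Sum>v\<in>fst H'. w v) + 2 * real k * (\<Sum>x\<in>R. w x)" using IH cR by linarith
    also have "\<dots> = 2 * real k * (\<Sum>v\<in>fst H. w v)"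
    proof -
      have "(\<Sum>v\<in>fst H. w v) = (\<Sum>v\<in>fst H - R. w v) + (\<Sum>v\<in>R. w v)"
        using RV fV by (metis add.commute sum.subset_diff)
      then show ?thesis unfolding H'_def induced_def by (simp add: algebra_simps)
    qed
    finally show ?thesis .
  qed
qed

lemma mwu_potential:
  fixes \<eta> \<delta> :: real and V :: "nat set" and ch :: "(nat \<Rightarrow> nat) \<Rightarrow> nat set"
  assumes fV: "finite V" and eta: "\<eta> > 0" and del: "\<delta> \<ge> 0"
    and hyp: "\<And>c. (\<Sum>v\<in>V \<inter> ch c. (1 + \<eta>) ^ c v) \<le> \<delta> * (\<Sum>v\<in>V. (1 + \<eta>) ^ c v)"
  defines "step \<equiv> (\<lambda>c v. c v + (if v \<in> ch c then 1 else 0))"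
  shows "(\<Sum>v\<in>V. (1 + \<eta>) ^ (step ^^ T) (\<lambda>_. 0) v) \<le> real (card V) * (1 + \<eta> * \<delta>) ^ T"
proof (induction T)
  case 0 then show ?case by simp
next
  case (Suc T)
  let ?c = "(step ^^ T) (\<lambda>_. 0)"
  have e: "(step ^^ Suc T) (\<lambda>_. 0) = step ?c" by simp
  let ?P = "\<Sum>v\<in>V. (1 + \<eta>) ^ ?c v"
  let ?Q = "\<Sum>v\<in>V \<inter> ch ?c. (1 + \<eta>) ^ ?c v"
  have e1: "(\<Sum>v\<in>V. (1 + \<eta>) ^ step ?c v) = (\<Sum>v\<in>V. (1 + \<eta>) ^ ?c v + (if v \<in> ch ?c then \<eta> * (1 + \<eta>) ^ ?c v else 0))"
    unfolding step_def by (intro sum.cong refl) (auto simp: algebra_simps)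
  have e2: "(\<Sum>v\<in>V. (1 + \<eta>) ^ ?c v + (if v \<in> ch ?c then \<eta> * (1 + \<eta>) ^ ?c v else 0))
      = ?P + (\<Sum>v\<in>V. if v \<in> ch ?c then \<eta> * (1 + \<eta>) ^ ?c v else 0)"
    by (rule sum.distrib)
  have e3: "(\<Sum>v\<in>V. if v \<in> ch ?c then \<eta> * (1 + \<eta>) ^ ?c v else 0) = \<eta> * ?Q"
    using fV by (simp add: sum.inter_restrict sum_distrib_left) (intro sum.cong refl, auto)
  have i1: "\<eta> * ?Q \<le> \<eta> * (\<delta> * ?P)" using hyp[of ?c] eta by (intro mult_left_mono) auto
  have i2: "(1 + \<eta> * \<delta>) * ?P \<le> (1 + \<eta> * \<delta>) * (real (card V) * (1 + \<eta> * \<delta>) ^ T)"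
    using Suc eta del by (intro mult_left_mono) auto
  have "(\<Sum>v\<in>V. (1 + \<eta>) ^ step ?c v) \<le> (1 + \<eta> * \<delta>) * (real (card V) * (1 + \<eta> * \<delta>) ^ T)"
    using e1 e2 e3 i1 i2 by (simp add: algebra_simps)
  then show ?case using e by (simp add: algebra_simps)
qed

lemma mwu_count:
  fixes ch :: "(nat \<Rightarrow> nat) \<Rightarrow> nat set"
  defines "step \<equiv> (\<lambda>c v. c v + (if v \<in> ch c then 1 else (0::nat)))"
  shows "(step ^^ T) (\<lambda>_. 0) v = card {t\<in>{..<T}. v \<in> ch ((step ^^ t) (\<lambda>_. 0))}"
proof (induction T)
  case 0 then show ?case by simp
next
  case (Suc T)
  have "{t\<in>{..<Suc T}. v \<in> ch ((step ^^ t) (\<lambda>_. 0))} =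
        {t\<in>{..<T}. v \<in> ch ((step ^^ t) (\<lambda>_. 0))} \<union> (if v \<in> ch ((step ^^ T) (\<lambda>_. 0)) then {T} else {})"
    by (auto simp: less_Suc_eq)
  then show ?case using Suc unfolding step_def by (auto simp: card_insert_if)
qed

lemma mwu_arith:
  fixes a T \<eta> \<delta> \<gamma> L :: real
  assumes H1: "a * (\<eta> - \<eta>\<^sup>2) \<le> L + T * \<eta> * \<delta>" and H2: "L \<le> T * \<eta> * \<gamma> / 2"
    and H3: "\<eta> * (\<delta> + \<gamma>) \<le> \<gamma> / 2" and eta: "0 < \<eta>" "\<eta> < 1" and T: "T \<ge> 0"
  shows "a \<le> T * (\<delta> + \<gamma>)"
proof (rule ccontr)
  assume "\<not> a \<le> T * (\<delta> + \<gamma>)"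
  then have lt: "T * (\<delta> + \<gamma>) < a" by simp
  have pos: "\<eta> - \<eta>\<^sup>2 > 0" using eta by (simp add: power2_eq_square)
  have "T * (\<delta> + \<gamma>) * (\<eta> - \<eta>\<^sup>2) < a * (\<eta> - \<eta>\<^sup>2)" using mult_strict_right_mono[OF lt pos] .
  moreover have "(T * \<eta>) * (\<eta> * (\<delta> + \<gamma>)) \<le> (T * \<eta>) * (\<gamma> / 2)"
    using H3 T eta by (intro mult_left_mono) auto
  moreover have "T * (\<delta> + \<gamma>) * (\<eta> - \<eta>\<^sup>2) = T * \<eta> * \<delta> + T * \<eta> * \<gamma> - (T * \<eta>) * (\<eta> * (\<delta> + \<gamma>))"
    by (simp add: algebra_simps power2_eq_square)
  ultimately show False using H1 H2 by (simp add: algebra_simps)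
qed

lemma mwu:
  fixes V :: "nat set" and XS :: "nat set set" and \<delta> \<gamma> :: real
  assumes fV: "finite V" and Vne: "V \<noteq> {}" and del: "\<delta> \<ge> 0" and gam: "\<gamma> > 0"
    and orc: "\<And>w. (\<forall>v\<in>V. w v \<in> \<rat> \<and> w v > 0) \<Longrightarrow> (\<exists>X\<in>XS. (\<Sum>v\<in>V \<inter> X. w v) \<le> \<delta> * (\<Sum>v\<in>V. w v))"
  shows "\<exists>\<pi> :: nat set pmf. set_pmf \<pi> \<subseteq> XS \<and> (\<forall>v\<in>V. measure_pmf.prob \<pi> {X. v \<in> X} \<le> \<delta> + \<gamma>)"
proof -
  obtain N :: nat where N: "N \<ge> 2" "real N \<ge> 2 * (\<delta> + \<gamma>) / \<gamma>"
    using real_arch_simple[of "2 * (\<delta> + \<gamma>) / \<gamma>"] by (metis le_cases nat_le_real_less not_le order_trans of_nat_le_iff)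
  define \<eta> :: real where "\<eta> = 1 / real N"
  have eta: "\<eta> > 0" "\<eta> \<le> 1 / 2" "\<eta> \<in> \<rat>" unfolding \<eta>_def using N by auto
  have H3: "\<eta> * (\<delta> + \<gamma>) \<le> \<gamma> / 2"
  proof -
    have "\<eta> * (\<delta> + \<gamma>) = (\<delta> + \<gamma>) / real N" unfolding \<eta>_def by simp
    also have "\<dots> \<le> (\<delta> + \<gamma>) / (2 * (\<delta> + \<gamma>) / \<gamma>)"
      using N gam del by (intro divide_left_mono) (auto intro!: mult_pos_pos divide_pos_pos)
    also have "\<dots> = \<gamma> / 2" using gam del by (simp add: field_simps)
    finally show ?thesis .
  qed
  define wt where "wt = (\<lambda>(c :: nat \<Rightarrow> nat) v. (1 + \<eta>) ^ c v)"
  have wtQ: "\<forall>v\<in>V. wt c v \<in> \<rat> \<and> wt c v > 0" for c unfolding wt_def using eta by auto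
  define ch where "ch = (\<lambda>c. SOME X. X \<in> XS \<and> (\<Sum>v\<in>V \<inter> X. wt c v) \<le> \<delta> * (\<Sum>v\<in>V. wt c v))"
  have ch: "ch c \<in> XS \<and> (\<Sum>v\<in>V \<inter> ch c. wt c v) \<le> \<delta> * (\<Sum>v\<in>V. wt c v)" for c
  proof -
    have ex: "\<exists>X. X \<in> XS \<and> (\<Sum>v\<in>V \<inter> X. wt c v) \<le> \<delta> * (\<Sum>v\<in>V. wt c v)"
      using orc[OF wtQ[of c]] by blast
    show ?thesis unfolding ch_def by (rule someI_ex[OF ex])
  qed
  define step where "step = (\<lambda>c v. c v + (if v \<in> ch c then 1 else (0::nat)))"
  define cnt where "cnt = (\<lambda>t. (step ^^ t) (\<lambda>_. 0))"
  define n where "n = card V"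
  have npos: "real n \<ge> 1" unfolding n_def using fV Vne by (simp add: Suc_leI card_gt_0_iff)
  obtain T :: nat where T: "T \<ge> 1" "real T \<ge> 2 * ln (real n) / (\<eta> * \<gamma>)"
    using real_arch_simple[of "2 * ln (real n) / (\<eta> * \<gamma>)"] by (metis le_cases nat_le_real_less not_le order_trans of_nat_le_iff one_le_numeral)
  have H2: "ln (real n) \<le> real T * \<eta> * \<gamma> / 2"
  proof -
    have "2 * ln (real n) / (\<eta> * \<gamma>) \<le> real T" using T by simp
    then have "2 * ln (real n) \<le> real T * (\<eta> * \<gamma>)" using eta gam by (simp add: divide_le_eq mult_pos_pos)
    then show ?thesis by (simp add: algebra_simps)
  qed
  define \<pi> where "\<pi> = map_pmf (\<lambda>t. ch (cnt t)) (pmf_of_set {..<T})"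
  have Tne: "{..<T} \<noteq> {}" using T by (simp add: lessThan_empty_iff)
  have "set_pmf \<pi> \<subseteq> XS" unfolding \<pi>_def using Tne ch by auto
  moreover have "measure_pmf.prob \<pi> {X. v \<in> X} \<le> \<delta> + \<gamma>" if v: "v \<in> V" for v
  proof -
    have p1: "0 < 1 + \<eta> * \<delta>" using eta del by (smt (verit) mult_nonneg_nonneg)
    have pot: "(\<Sum>u\<in>V. (1 + \<eta>) ^ cnt T u) \<le> real n * (1 + \<eta> * \<delta>) ^ T"
      unfolding cnt_def n_def step_def
      by (rule mwu_potential[OF fV eta(1) del]) (use ch in \<open>simp add: wt_def\<close>)
    have "(1 + \<eta>) ^ cnt T v \<le> (\<Sum>u\<in>V. (1 + \<eta>) ^ cnt T u)"
      using fV v eta by (intro member_le_sum) auto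
    then have b: "(1 + \<eta>) ^ cnt T v \<le> real n * (1 + \<eta> * \<delta>) ^ T" using pot by linarith
    have "ln ((1 + \<eta>) ^ cnt T v) \<le> ln (real n * (1 + \<eta> * \<delta>) ^ T)"
    proof -
      have "0 < real n * (1 + \<eta> * \<delta>) ^ T"
        by (rule mult_pos_pos) (use npos in simp, rule zero_less_power[OF p1])
      then show ?thesis using b eta by (subst ln_le_cancel_iff) auto
    qed
    then have "real (cnt T v) * ln (1 + \<eta>) \<le> ln (real n) + real T * ln (1 + \<eta> * \<delta>)"
      using eta npos del p1 by (simp add: ln_mult ln_realpow)
    moreover have "ln (1 + \<eta> * \<delta>) \<le> \<eta> * \<delta>" using eta del by (intro ln_add_one_self_le_self) auto
    moreover have "\<eta> - \<eta>\<^sup>2 \<le> ln (1 + \<eta>)" using eta by (intro ln_one_plus_pos_lower_bound) auto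
    ultimately have H1: "real (cnt T v) * (\<eta> - \<eta>\<^sup>2) \<le> ln (real n) + real T * \<eta> * \<delta>"
    proof -
      assume a1: "real (cnt T v) * ln (1 + \<eta>) \<le> ln (real n) + real T * ln (1 + \<eta> * \<delta>)"
        and a2: "ln (1 + \<eta> * \<delta>) \<le> \<eta> * \<delta>" and a3: "\<eta> - \<eta>\<^sup>2 \<le> ln (1 + \<eta>)"
      have "real (cnt T v) * (\<eta> - \<eta>\<^sup>2) \<le> real (cnt T v) * ln (1 + \<eta>)" using a3 by (intro mult_left_mono) auto
      moreover have "real T * ln (1 + \<eta> * \<delta>) \<le> real T * (\<eta> * \<delta>)" using a2 by (intro mult_left_mono) auto
      ultimately show ?thesis using a1 by (simp add: algebra_simps)
    qed
    have cT: "real (cnt T v) \<le> real T * (\<delta> + \<gamma>)"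
      by (rule mwu_arith[OF H1 H2 H3 eta(1)]) (use eta in auto)
    have "measure_pmf.prob \<pi> {X. v \<in> X} = real (card ({..<T} \<inter> {t. v \<in> ch (cnt t)})) / real T"
      unfolding \<pi>_def using Tne by (simp add: measure_pmf_of_set vimage_def)
    also have "card ({..<T} \<inter> {t. v \<in> ch (cnt t)}) = cnt T v"
    proof -
      have "cnt T v = card {t\<in>{..<T}. v \<in> ch (cnt t)}" unfolding cnt_def step_def by (rule mwu_count)
      moreover have "{..<T} \<inter> {t. v \<in> ch (cnt t)} = {t\<in>{..<T}. v \<in> ch (cnt t)}" by blast
      ultimately show ?thesis by simp
    qed
    also have "real (cnt T v) / real T \<le> \<delta> + \<gamma>" using cT T by (simp add: divide_le_eq mult.commute)
    finally show ?thesis .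
  qed
  ultimately show ?thesis by blast
qed

lemma gaifman_sym: "(u, v) \<in> snd (gaifman B) \<Longrightarrow> (v, u) \<in> snd (gaifman B)"
  unfolding gaifman_def by auto

lemma density:
  fixes w :: "nat \<Rightarrow> real"
  assumes G: "is_graph G" "fst G \<noteq> {}" and w: "\<forall>v\<in>fst G. w v \<in> \<rat> \<and> w v > 0"
    and B: "is_struct (sigG G) B" and d: "d_opt (sigG G) (AW G w) B \<le> ereal (ln 2 / 2)"
    and tw: "treewidth (gaifman B) \<le> k0"
  shows "(\<Sum>e\<in>snd G. mnw w e) \<le> (4 * real k0 + 1) * (\<Sum>v\<in>fst G. w v)"
proof -
  have fV: "finite (fst G)" and GG: "snd G \<subseteq> fst G \<times> fst G" and irr: "\<And>u. (u, u) \<notin> snd G"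
    using G unfolding is_graph_def by auto
  have fE: "finite (snd G)" using GG fV finite_subset by blast
  have mpos: "mnw w e \<ge> 0" if "e \<in> snd G" for e
  proof -
    obtain a b where e: "e = (a, b)" by (cases e)
    have "a \<in> fst G" "b \<in> fst G" using GG that e by auto
    then show ?thesis using w e unfolding mnw_def by (auto simp: less_imp_le)
  qed
  have ex: "exp (- 2 * (ln 2 / 2)) = (1/2 :: real)" by (simp add: exp_minus)
  obtain g Z Pe where g: "\<forall>v\<in>fst G. g v \<in> fst B" and Z: "Z \<subseteq> fst G" and inj: "inj_on g Z"
    and Pe: "Pe \<subseteq> snd G \<inter> (Z \<times> Z)" and Pe_edge: "\<forall>a b. (a, b) \<in> Pe \<longrightarrow> (g a, g b) \<in> snd (gaifman B)"
    and fail: "(\<Sum>v\<in>fst G - Z. w v) + (\<Sum>e\<in>snd G - Pe. mnw w e)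
        \<le> (1 - exp (- 2 * (ln 2 / 2))) * ((\<Sum>v\<in>fst G. w v) + (\<Sum>e\<in>snd G. mnw w e))"
    using graph_core[OF G w B d] by blast
  define W where "W = (\<Sum>v\<in>fst G. w v)"
  define M where "M = (\<Sum>e\<in>snd G. mnw w e)"
  define H where "H = (Z, Pe \<union> converse Pe)"
  have wfH: "wf_graph H" unfolding H_def wf_graph_def using Z Pe fV finite_subset by auto
  have wfB: "wf_graph (gaifman B)" by (rule wf_gaifman[OF B])
  have irrH: "\<forall>u. (u, u) \<notin> snd H" unfolding H_def using Pe irr by auto
  have "treewidth H \<le> treewidth (gaifman B)"
  proof (rule tw_embed[OF wfH wfB])
    show "inj_on g (fst H)" unfolding H_def using inj by simp
    show "g ` fst H \<subseteq> fst (gaifman B)" unfolding H_def gaifman_def using g Z by auto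
    show "(g u, g v) \<in> snd (gaifman B)" if "(u, v) \<in> snd H" for u v
      using that Pe_edge gaifman_sym[of "g v" "g u" B] unfolding H_def by auto
  qed
  then have "treewidth H \<le> k0" using tw by simp
  then have "decomp_le H k0" using tw_le_iff[OF wfH] by blast
  then obtain N F \<beta> where D: "tree_decomp H N F \<beta>" "\<forall>t\<in>N. card (\<beta> t) \<le> k0 + 1"
    unfolding decomp_le_def by blast
  have wZ: "\<forall>v\<in>fst H. w v \<ge> 0" unfolding H_def using w Z by (auto simp: less_imp_le)
  have sp: "(\<Sum>e\<in>snd H. mnw w e) \<le> 2 * real k0 * (\<Sum>v\<in>fst H. w v)"
    by (rule sparse[OF D(1) wfH irrH D(2) wZ])
  have "(\<Sum>v\<in>fst H. w v) \<le> W" unfolding W_def H_def using Z fV w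
    by (intro sum_mono2) (auto simp: less_imp_le)
  then have sp2: "(\<Sum>e\<in>snd H. mnw w e) \<le> 2 * real k0 * W" using sp
    by (smt (verit) mult_left_mono of_nat_0_le_iff)
  have fH: "finite (snd H)" using wfH unfolding wf_graph_def by (meson finite_SigmaI finite_subset)
  have "(\<Sum>e\<in>Pe. mnw w e) \<le> (\<Sum>e\<in>snd H. mnw w e)"
  proof (rule sum_mono2[OF fH])
    show "Pe \<subseteq> snd H" unfolding H_def by auto
    show "0 \<le> mnw w e" if "e \<in> snd H - Pe" for e
    proof -
      obtain a b where e: "e = (a, b)" by (cases e)
      have "a \<in> fst G" "b \<in> fst G" using that e Pe Z unfolding H_def by auto
      then show ?thesis using w e unfolding mnw_def by (auto simp: less_imp_le)
    qed
  qed
  moreover have "M = (\<Sum>e\<in>Pe. mnw w e) + (\<Sum>e\<in>snd G - Pe. mnw w e)"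
    unfolding M_def using fE Pe by (metis (no_types, lifting) add.commute le_inf_iff sum.subset_diff)
  moreover have "(\<Sum>v\<in>fst G - Z. w v) \<ge> 0" using w by (intro sum_nonneg) (auto simp: less_imp_le)
  moreover have "(\<Sum>v\<in>fst G - Z. w v) + (\<Sum>e\<in>snd G - Pe. mnw w e) \<le> W / 2 + M / 2"
    using fail unfolding ex W_def M_def by simp
  ultimately have "M \<le> 2 * real k0 * W + W / 2 + M / 2" using sp2 unfolding W_def M_def by linarith
  then show ?thesis unfolding W_def M_def by (simp add: algebra_simps)
qed

lemma good_set:
  fixes w :: "nat \<Rightarrow> real"
  assumes G: "is_graph G" "fst G \<noteq> {}" and w: "\<forall>v\<in>fst G. w v \<in> \<rat> \<and> w v > 0"
    and B: "is_struct (sigG G) B" and d: "d_opt (sigG G) (AW G w) B \<le> ereal \<epsilon>"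
    and tw: "treewidth (gaifman B) \<le> k"
    and dens: "(\<Sum>e\<in>snd G. mnw w e) \<le> D * (\<Sum>v\<in>fst G. w v)"
    and th: "(1 - exp (- 2 * \<epsilon>)) * (D + 1) \<le> \<delta>" "\<epsilon> \<ge> 0"
  shows "\<exists>X. X \<subseteq> fst G \<and> treewidth (del_verts G X) \<le> k \<and> (\<Sum>v\<in>fst G \<inter> X. w v) \<le> \<delta> * (\<Sum>v\<in>fst G. w v)"
proof -
  have fV: "finite (fst G)" and GG: "snd G \<subseteq> fst G \<times> fst G"
    using G unfolding is_graph_def by auto
  have fE: "finite (snd G)" using GG fV finite_subset by blast
  obtain g Z Pe where g: "\<forall>v\<in>fst G. g v \<in> fst B" and Z: "Z \<subseteq> fst G" and inj: "inj_on g Z"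
    and Pe: "Pe \<subseteq> snd G \<inter> (Z \<times> Z)" and Pe_edge: "\<forall>a b. (a, b) \<in> Pe \<longrightarrow> (g a, g b) \<in> snd (gaifman B)"
    and fail: "(\<Sum>v\<in>fst G - Z. w v) + (\<Sum>e\<in>snd G - Pe. mnw w e)
        \<le> (1 - exp (- 2 * \<epsilon>)) * ((\<Sum>v\<in>fst G. w v) + (\<Sum>e\<in>snd G. mnw w e))"
    using graph_core[OF G w B d] by blast
  define W where "W = (\<Sum>v\<in>fst G. w v)"
  define M where "M = (\<Sum>e\<in>snd G. mnw w e)"
  define am where "am = (\<lambda>e :: nat \<times> nat. if w (fst e) \<le> w (snd e) then fst e else snd e)"
  have am: "w (am e) = mnw w e" "am e = fst e \<or> am e = snd e" for e unfolding am_def mnw_def by auto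
  define X where "X = (fst G - Z) \<union> am ` (snd G - Pe)"
  have amV: "am e \<in> fst G" if "e \<in> snd G" for e
  proof -
    have "fst e \<in> fst G" "snd e \<in> fst G" using GG that by auto
    then show ?thesis using am(2)[of e] by auto
  qed
  have XV: "X \<subseteq> fst G" unfolding X_def using amV by auto
  have wpos: "\<forall>v\<in>fst G. w v \<ge> 0" using w by (auto simp: less_imp_le)
  have "(\<Sum>v\<in>fst G \<inter> X. w v) = (\<Sum>v\<in>X. w v)" using XV by (simp add: Int_absorb1)
  also have "\<dots> \<le> (\<Sum>v\<in>fst G - Z. w v) + (\<Sum>v\<in>am ` (snd G - Pe). w v)"
  proof -
    have f1: "finite (fst G - Z)" "finite (am ` (snd G - Pe))" using fV fE by auto
    have "(\<Sum>v\<in>(fst G - Z) \<inter> am ` (snd G - Pe). w v) \<ge> 0" using wpos XV unfolding X_def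
      by (intro sum_nonneg) auto
    then show ?thesis unfolding X_def using sum_Un[OF f1, of w] by linarith
  qed
  also have "(\<Sum>v\<in>am ` (snd G - Pe). w v) \<le> (\<Sum>e\<in>snd G - Pe. w (am e))"
  proof -
    have "\<forall>e\<in>snd G - Pe. 0 \<le> w (am e)" using wpos amV by auto
    then show ?thesis using sum_image_le[of "snd G - Pe" w am] fE by (simp add: comp_def)
  qed
  also have "(\<Sum>e\<in>snd G - Pe. w (am e)) = (\<Sum>e\<in>snd G - Pe. mnw w e)" using am(1) by simp
  also have "(\<Sum>v\<in>fst G - Z. w v) + (\<Sum>e\<in>snd G - Pe. mnw w e) \<le> (1 - exp (- 2 * \<epsilon>)) * (W + M)"
    using fail unfolding W_def M_def .
  also have "\<dots> \<le> (1 - exp (- 2 * \<epsilon>)) * (W + D * W)"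
    using dens th(2) unfolding W_def M_def by (intro mult_left_mono) auto
  also have "\<dots> = ((1 - exp (- 2 * \<epsilon>)) * (D + 1)) * W" by (simp add: algebra_simps)
  also have "\<dots> \<le> \<delta> * W"
  proof -
    have "W \<ge> 0" unfolding W_def using wpos by (intro sum_nonneg) auto
    then show ?thesis using th(1) by (intro mult_right_mono) auto
  qed
  finally have wX: "(\<Sum>v\<in>fst G \<inter> X. w v) \<le> \<delta> * W" by simp
  have "treewidth (del_verts G X) \<le> treewidth (gaifman B)"
  proof (rule tw_embed[OF wf_del_verts[OF is_graph_wf[OF G(1)]] wf_gaifman[OF B]])
    have sub: "fst (del_verts G X) \<subseteq> Z" unfolding del_verts_def X_def by auto
    show "inj_on g (fst (del_verts G X))" using inj_on_subset[OF inj sub] .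
    show "g ` fst (del_verts G X) \<subseteq> fst (gaifman B)" using g unfolding del_verts_def gaifman_def by auto
    show "(g u, g v) \<in> snd (gaifman B)" if uv: "(u, v) \<in> snd (del_verts G X)" for u v
    proof -
      have e: "(u, v) \<in> snd G" "u \<notin> X" "v \<notin> X" using uv unfolding del_verts_def by auto
      have "(u, v) \<in> Pe"
      proof (rule ccontr)
        assume "(u, v) \<notin> Pe"
        then have "am (u, v) \<in> X" using e(1) unfolding X_def by auto
        then show False using e am(2)[of "(u, v)"] by auto
      qed
      then show ?thesis using Pe_edge by blast
    qed
  qed
  then have "treewidth (del_verts G X) \<le> k" using tw by simp
  then show ?thesis using XV wX unfolding W_def by blast
qed

lemma pliable_get:
  assumes pl: "tw_pliable (A_class \<G> r)" and e: "\<epsilon> > 0"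
  shows "\<exists>k. \<forall>\<sigma> A. (\<sigma>, A) \<in> A_class \<G> r \<longrightarrow>
      (\<exists>B. is_struct \<sigma> B \<and> treewidth (gaifman B) \<le> k \<and> d_opt \<sigma> A B \<le> ereal \<epsilon>)"
proof -
  obtain k where k: "\<forall>(\<sigma>, \<A>)\<in>A_class \<G> r.
      \<exists>\<B>. is_struct \<sigma> \<B> \<and> treewidth (gaifman \<B>) \<le> k \<and> d_opt \<sigma> \<A> \<B> \<le> ereal \<epsilon>"
    using pl e unfolding tw_pliable_def by blast
  show ?thesis
  proof (intro exI[of _ k] allI impI)
    fix \<sigma> A assume "(\<sigma>, A) \<in> A_class \<G> r"
    from bspec[OF k this] show "\<exists>B. is_struct \<sigma> B \<and> treewidth (gaifman B) \<le> k \<and> d_opt \<sigma> A B \<le> ereal \<epsilon>" by simp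
  qed
qed

lemma backward:
  fixes \<G> :: "graph set" and r :: nat
  assumes graphs: "\<forall>G\<in>\<G>. is_graph G" and r: "r \<ge> 2" and pl: "tw_pliable (A_class \<G> r)"
  shows "frac_tw_fragile \<G>"
  unfolding frac_tw_fragile_def
proof (intro allI impI)
  fix \<epsilon> :: real assume e: "\<epsilon> > 0"
  have e0: "ln 2 / 2 > (0::real)" by simp
  obtain k0 where k0: "\<forall>\<sigma> A. (\<sigma>, A) \<in> A_class \<G> r \<longrightarrow>
      (\<exists>B. is_struct \<sigma> B \<and> treewidth (gaifman B) \<le> k0 \<and> d_opt \<sigma> A B \<le> ereal (ln 2 / 2))"
    using pliable_get[OF pl e0] by blast
  define D :: real where "D = 4 * real k0 + 1"
  define \<delta> where "\<delta> = \<epsilon> / 2"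
  define \<theta> where "\<theta> = min (1/2) (\<delta> / (D + 1))"
  have Dp: "D + 1 > 0" unfolding D_def by simp
  have dp: "\<delta> > 0" unfolding \<delta>_def using e by simp
  have th1: "0 < \<theta>" unfolding \<theta>_def using dp Dp by simp
  have th2: "\<theta> \<le> 1/2" unfolding \<theta>_def by (rule min.cobounded1)
  have "\<theta> \<le> \<delta> / (D + 1)" unfolding \<theta>_def by simp
  then have th3: "\<theta> * (D + 1) \<le> \<delta>" using Dp by (simp add: le_divide_eq)
  note th = th1 th2 th3
  define \<epsilon>' where "\<epsilon>' = - ln (1 - \<theta>) / 2"
  have e'p: "\<epsilon>' > 0" unfolding \<epsilon>'_def using th by simp
  have e'th: "1 - exp (- 2 * \<epsilon>') = \<theta>" unfolding \<epsilon>'_def using th by simp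
  obtain k where k: "\<forall>\<sigma> A. (\<sigma>, A) \<in> A_class \<G> r \<longrightarrow>
      (\<exists>B. is_struct \<sigma> B \<and> treewidth (gaifman B) \<le> k \<and> d_opt \<sigma> A B \<le> ereal \<epsilon>')"
    using pliable_get[OF pl e'p] by blast
  show "\<exists>k. \<forall>G\<in>\<G>. \<exists>\<pi> :: nat set pmf. set_pmf \<pi> \<subseteq> {X. X \<subseteq> fst G \<and> treewidth (del_verts G X) \<le> k}
    \<and> (\<forall>v\<in>fst G. measure_pmf.prob \<pi> {X. v \<in> X} \<le> \<epsilon>)"
  proof (intro exI[of _ k] ballI)
    fix G assume GG: "G \<in> \<G>"
    have G: "is_graph G" using graphs GG by blast
    show "\<exists>\<pi> :: nat set pmf. set_pmf \<pi> \<subseteq> {X. X \<subseteq> fst G \<and> treewidth (del_verts G X) \<le> k}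
      \<and> (\<forall>v\<in>fst G. measure_pmf.prob \<pi> {X. v \<in> X} \<le> \<epsilon>)"
    proof (cases "fst G = {}")
      case True
      have wf: "wf_graph (del_verts G {})" by (rule wf_del_verts[OF is_graph_wf[OF G]])
      have "decomp_le (del_verts G {}) k" using decomp_empty[OF wf] True unfolding del_verts_def by simp
      then have "treewidth (del_verts G {}) \<le> k" using tw_le_iff[OF wf] by simp
      then show ?thesis using True by (intro exI[of _ "return_pmf {}"]) auto
    next
      case False
      have fV: "finite (fst G)" using G unfolding is_graph_def by simp
      have "\<exists>\<pi> :: nat set pmf. set_pmf \<pi> \<subseteq> {X. X \<subseteq> fst G \<and> treewidth (del_verts G X) \<le> k}
        \<and> (\<forall>v\<in>fst G. measure_pmf.prob \<pi> {X. v \<in> X} \<le> \<delta> + \<delta>)"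
      proof (rule mwu[OF fV False])
        show "0 \<le> \<delta>" "0 < \<delta>" unfolding \<delta>_def using e by auto
        fix w :: "nat \<Rightarrow> real" assume w: "\<forall>v\<in>fst G. w v \<in> \<rat> \<and> 0 < w v"
        have cl: "(sigG G, AW G w) \<in> A_class \<G> r" by (rule AW_class[OF GG G False w r])
        obtain B0 where B0: "is_struct (sigG G) B0" "treewidth (gaifman B0) \<le> k0"
          "d_opt (sigG G) (AW G w) B0 \<le> ereal (ln 2 / 2)" using k0 cl by blast
        have dens: "(\<Sum>e\<in>snd G. mnw w e) \<le> D * (\<Sum>v\<in>fst G. w v)"
          unfolding D_def by (rule density[OF G False w B0(1) B0(3) B0(2)])
        obtain B where B: "is_struct (sigG G) B" "treewidth (gaifman B) \<le> k"
          "d_opt (sigG G) (AW G w) B \<le> ereal \<epsilon>'" using k cl by blast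
        have "\<exists>X. X \<subseteq> fst G \<and> treewidth (del_verts G X) \<le> k \<and> (\<Sum>v\<in>fst G \<inter> X. w v) \<le> \<delta> * (\<Sum>v\<in>fst G. w v)"
          by (rule good_set[OF G False w B(1) B(3) B(2) dens]) (use e'th th e'p in auto)
        then show "\<exists>X\<in>{X. X \<subseteq> fst G \<and> treewidth (del_verts G X) \<le> k}. (\<Sum>v\<in>fst G \<inter> X. w v) \<le> \<delta> * (\<Sum>v\<in>fst G. w v)"
          by blast
      qed
      then show ?thesis unfolding \<delta>_def by simp
    qed
  qed
qed


theorem lemma4:
  fixes \<G> :: "graph set" and r :: nat
  assumes "\<forall>G\<in>\<G>. is_graph G"
    and "r \<ge> 2"
  shows "frac_tw_fragile \<G> \<longleftrightarrow> tw_pliable (A_class \<G> r)"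
proof
  assume "frac_tw_fragile \<G>"
  then show "tw_pliable (A_class \<G> r)" using forward[OF assms] by blast
next
  assume "tw_pliable (A_class \<G> r)"
  then show "frac_tw_fragile \<G>" using backward[OF assms] by blast
qed

end
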